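(* The family $\mathcal{P}_L^+$ of strictly positive $L$-decomposable distributions on $S_n$ is the log-linear model $\mathcal{L}(\Phi_k\times\Psi:\ 1\le k\le n)$, and its number of free parameters is \[ b_n=\sum_{k=2}^n\binom{n}{k}(k-1)=2^n\left(\tfrac n2-1\right)+1. \]
   Context: $S_n$ is the group of permutations of $\{1,\ldots,n\}$. A distribution $p$ on $S_n$ is $L$-decomposable if a random permutation $\Pi\sim p$ satisfies, for every $2\le k\le n-2$ and $\pi\in S_n$, $P(\Pi(k+1)=\pi(k+1)\mid (\Pi(1),\ldots,\Pi(k))=(\pi(1),\ldots,\pi(k))) = P(\Pi(k+1)=\pi(k+1)\mid \{\Pi(1),\ldots,\Pi(k)\}=\{\pi(1),\ldots,\pi(k)\})$ whenever the left side is defined. A product partition of the $n\times n$ board is $\mathcal{B}=\mathcal{R}\times\mathcal{C}=(R_i\times C_j)$ with $\mathcal{R},\mathcal{C}$ partitions of $\{1,\ldots,n\}$; its marginal is $|\pi_{\mathcal{B}}|=(t_{ij})$, $t_{ij}=|\{s:(s,\pi(s))\in R_i\times C_j\}|$. $U^{\mathcal{B}}=\{v\in\mathbb{R}^{S_n}: |\pi_{\mathcal{B}}|=|\sigma_{\mathcal{B}}|\Rightarrow v(\pi)=v(\sigma)\}$. The log-linear model $\mathcal{L}(\mathcal{B}_1,\ldots,\mathcal{B}_s)$ is the set of strictly positive distributions $p$ on $S_n$ with $\log p\in U:=\mathrm{Span}(U^{\mathcal{B}_1},\ldots,U^{\mathcal{B}_s})$; its number of free parameters is $\dim U-1$. Bold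 sections: $\Phi_k=(\{1,\ldots,k-1\},\{k\},\{k+1,\ldots,n\})$ for $1\le k\le n$ (empty blocks omitted). Full partition: $\Psi=(\{1\},\ldots,\{n\})$. *)

theory Defs
  imports Complex_Main "HOL-Combinatorics.Permutations" "HOL-Library.Function_Algebras"
begin

type_synonym perm = "nat \<Rightarrow> nat"

definition Sym :: "nat \<Rightarrow> perm set" where
  "Sym n = {\<pi>. \<pi> permutes {1..n}}"

definition distribution :: "nat \<Rightarrow> (perm \<Rightarrow> real) \<Rightarrow> bool" where
  "distribution n p \<longleftrightarrow> (\<forall>\<pi>\<in>Sym n. p \<pi> \<ge> 0) \<and> (\<forall>\<pi>. \<pi> \<notin> Sym n \<longrightarrow> p \<pi> = 0)
      \<and> (\<Sum>\<pi>\<in>Sym n. p \<pi>) = 1"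

definition strictly_positive :: "nat \<Rightarrow> (perm \<Rightarrow> real) \<Rightarrow> bool" where
  "strictly_positive n p \<longleftrightarrow> distribution n p \<and> (\<forall>\<pi>\<in>Sym n. p \<pi> > 0)"

definition Pr :: "nat \<Rightarrow> (perm \<Rightarrow> real) \<Rightarrow> (perm \<Rightarrow> bool) \<Rightarrow> real" where
  "Pr n p E = (\<Sum>\<sigma>\<in>{\<sigma>\<in>Sym n. E \<sigma>}. p \<sigma>)"

definition cond_Pr :: "nat \<Rightarrow> (perm \<Rightarrow> real) \<Rightarrow> (perm \<Rightarrow> bool) \<Rightarrow> (perm \<Rightarrow> bool) \<Rightarrow> real" where
  "cond_Pr n p A B = Pr n p (\<lambda>\<sigma>. A \<sigma> \<and> B \<sigma>) / Pr n p B"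

text \<open>The conditioning events are
  (Pi(1),...,Pi(k)) = (pi(1),...,pi(k)) and {Pi(1),...,Pi(k)} = {pi(1),...,pi(k)};
  the left conditional probability is defined iff its conditioning event has positive probability.\<close>
definition L_decomposable :: "nat \<Rightarrow> (perm \<Rightarrow> real) \<Rightarrow> bool" where
  "L_decomposable n p \<longleftrightarrow>
     (\<forall>k \<pi>. 2 \<le> k \<and> k \<le> n - 2 \<and> \<pi> \<in> Sym n \<and>
        Pr n p (\<lambda>\<sigma>. \<forall>i\<in>{1..k}. \<sigma> i = \<pi> i) > 0 \<longrightarrow>
        cond_Pr n p (\<lambda>\<sigma>. \<sigma> (k+1) = \<pi> (k+1)) (\<lambda>\<sigma>. \<forall>i\<in>{1..k}. \<sigma> i = \<pi> i)
        = cond_Pr n p (\<lambda>\<sigma>. \<sigma> (k+1) = \<pi> (k+1)) (\<lambda>\<sigma>. \<sigma> ` {1..k} = \<pi> ` {1..k}))"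

text \<open>A product partition R x C of the board is given by two partitions R, C of {1..n}
  (as sets of blocks); the marginal of pi is the table t(A,B) = |{s \<in> A. pi s \<in> B}|.\<close>
definition marginal :: "nat set set \<Rightarrow> nat set set \<Rightarrow> perm \<Rightarrow> (nat set \<times> nat set \<Rightarrow> nat)" where
  "marginal R C \<pi> = (\<lambda>(A,B). if A \<in> R \<and> B \<in> C then card {s\<in>A. \<pi> s \<in> B} else 0)"

text \<open>Vectors in R^{S_n} are represented as functions perm => real vanishing outside S_n.\<close>
definition vecs :: "nat \<Rightarrow> (perm \<Rightarrow> real) set" where
  "vecs n = {v. \<forall>\<pi>. \<pi> \<notin> Sym n \<longrightarrow> v \<pi> = 0}"

definition U_part :: "nat \<Rightarrow> nat set set \<Rightarrow> nat set set \<Rightarrow> (perm \<Rightarrow> real) set" where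
  "U_part n R C = {v \<in> vecs n. \<forall>\<pi>\<in>Sym n. \<forall>\<sigma>\<in>Sym n.
       marginal R C \<pi> = marginal R C \<sigma> \<longrightarrow> v \<pi> = v \<sigma>}"

definition fscale :: "real \<Rightarrow> ('a \<Rightarrow> real) \<Rightarrow> ('a \<Rightarrow> real)" where
  "fscale c f = (\<lambda>x. c * f x)"

abbreviation fspan :: "('a \<Rightarrow> real) set \<Rightarrow> ('a \<Rightarrow> real) set" where
  "fspan \<equiv> module.span fscale"

abbreviation fdim :: "('a \<Rightarrow> real) set \<Rightarrow> nat" where
  "fdim \<equiv> vector_space.dim fscale"

definition U_model :: "nat \<Rightarrow> (nat set set \<times> nat set set) set \<Rightarrow> (perm \<Rightarrow> real) set" where
  "U_model n Bs = fspan (\<Union>(R,C)\<in>Bs. U_part n R C)"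

definition logp :: "nat \<Rightarrow> (perm \<Rightarrow> real) \<Rightarrow> (perm \<Rightarrow> real)" where
  "logp n p = (\<lambda>\<pi>. if \<pi> \<in> Sym n then ln (p \<pi>) else 0)"

definition loglinear_model :: "nat \<Rightarrow> (nat set set \<times> nat set set) set \<Rightarrow> (perm \<Rightarrow> real) set" where
  "loglinear_model n Bs = {p. strictly_positive n p \<and> logp n p \<in> U_model n Bs}"

definition Phi :: "nat \<Rightarrow> nat \<Rightarrow> nat set set" where
  "Phi n k = {A \<in> {{1..<k}, {k}, {k<..n}}. A \<noteq> {}}"

definition Psi :: "nat \<Rightarrow> nat set set" where
  "Psi n = (\<lambda>i. {i}) ` {1..n}"

end

theory Submission
  imports Defs
begin

lemma fscale_vs: "vector_space (fscale :: real \<Rightarrow> ('a \<Rightarrow> real) \<Rightarrow> _)"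
  by unfold_locales (auto simp: fscale_def fun_eq_iff algebra_simps)

interpretation FV: vector_space "fscale :: real \<Rightarrow> ('a \<Rightarrow> real) \<Rightarrow> _"
  by (rule fscale_vs)

lemma sum_fun_apply: "(sum f A) x = (\<Sum>a\<in>A. f a x)" for f :: "'b \<Rightarrow> 'a \<Rightarrow> real"
  by (induction A rule: infinite_finite_induct) auto

lemma Sym_permutes: "\<pi> \<in> Sym n \<Longrightarrow> \<pi> permutes {1..n}" by (simp add: Sym_def)
lemma Sym_inj: "\<pi> \<in> Sym n \<Longrightarrow> inj \<pi>" by (rule permutes_inj[OF Sym_permutes])
lemma Sym_out: "\<pi> \<in> Sym n \<Longrightarrow> i \<notin> {1..n} \<Longrightarrow> \<pi> i = i"
  by (rule permutes_not_in[OF Sym_permutes])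
lemma Sym_in: assumes "\<pi> \<in> Sym n" "i \<in> {1..n}" shows "\<pi> i \<in> {1..n}"
  using permutes_in_image[OF Sym_permutes[OF assms(1)]] assms(2) by simp
lemma Sym_image: "\<pi> \<in> Sym n \<Longrightarrow> \<pi> ` {1..n} = {1..n}"
  by (rule permutes_image[OF Sym_permutes])
lemma Sym_image_sub: "\<pi> \<in> Sym n \<Longrightarrow> A \<subseteq> {1..n} \<Longrightarrow> \<pi> ` A \<subseteq> {1..n}"
  using Sym_in by auto
lemma finite_Sym: "finite (Sym n)"
  unfolding Sym_def by (rule finite_permutations) simp

lemma Sym_eq:
  assumes "\<pi> \<in> Sym n" "\<sigma> \<in> Sym n" "\<forall>i\<in>{1..n}. \<sigma> i = \<pi> i" shows "\<sigma> = \<pi>"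
proof (rule ext)
  fix x show "\<sigma> x = \<pi> x"
  proof (cases "x \<in> {1..n}")
    case True then show ?thesis using assms(3) by blast
  next
    case False then show ?thesis using Sym_out[OF assms(1) False] Sym_out[OF assms(2) False] by simp
  qed
qed

lemma Sym_mkI:
  assumes "bij_betw \<pi> {1..n} {1..n}" "\<And>i. i \<notin> {1..n} \<Longrightarrow> \<pi> i = i"
  shows "\<pi> \<in> Sym n"
  unfolding Sym_def mem_Collect_eq by (rule bij_imp_permutes[OF assms])

lemma splice_Sym:
  assumes p: "\<pi> \<in> Sym n" and s: "\<sigma> \<in> Sym n" and k: "k \<le> n"
    and eq: "\<pi> ` {1..k} = \<sigma> ` {1..k}"
  shows "(\<lambda>i. if i \<in> {1..k} then \<pi> i else \<sigma> i) \<in> Sym n" (is "?t \<in> _")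
proof (rule Sym_mkI)
  have U: "{1..n} = {1..k} \<union> {k<..n}" using k by auto
  have im: "?t ` {1..n} = {1..n}"
  proof -
    have "?t ` {1..n} = \<pi> ` {1..k} \<union> \<sigma> ` {k<..n}" unfolding U by (auto simp: image_Un)
    also have "\<dots> = \<sigma> ` {1..k} \<union> \<sigma> ` {k<..n}" using eq by simp
    also have "\<dots> = {1..n}" using Sym_image[OF s] U by (simp add: image_Un[symmetric])
    finally show ?thesis .
  qed
  have "inj_on ?t {1..n}" by (rule eq_card_imp_inj_on) (simp_all only: im finite_atLeastAtMost)
  thus "bij_betw ?t {1..n} {1..n}" using im by (simp add: bij_betw_def)
  show "i \<notin> {1..n} \<Longrightarrow> ?t i = i" for i using k Sym_out[OF s] by auto
qed

lemma exists_perm_prefix: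
  assumes S: "S \<subseteq> {1..n}" and j: "j \<in> {1..n}" "j \<notin> S"
  shows "\<exists>\<pi>\<in>Sym n. \<pi> ` {1..<card S + 1} = S \<and> \<pi> (card S + 1) = j"
proof -
  define xs where "xs = sorted_list_of_set S @ [j] @ sorted_list_of_set ({1..n} - S - {j})"
  have finS: "finite S" using S finite_subset by blast
  have dxs: "distinct xs" using j finS unfolding xs_def by auto
  have sxs: "set xs = {1..n}" using S j finS unfolding xs_def by auto
  have lxs: "length xs = n" using distinct_card[OF dxs] sxs by simp
  define \<pi> where "\<pi> i = (if i \<in> {1..n} then xs ! (i - 1) else i)" for i
  have im: "\<pi> ` {1..n} = {1..n}"
  proof -
    have "\<pi> ` {1..n} = (\<lambda>i. xs ! (i - 1)) ` {1..n}" by (auto simp: \<pi>_def)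
    also have "\<dots> = (\<lambda>i. xs ! i) ` {..<n}"
      by (simp only: image_Suc_lessThan[symmetric] image_image diff_Suc_1)
    also have "\<dots> = set xs" using lxs by (auto simp: set_conv_nth)
    finally show ?thesis using sxs by simp
  qed
  have "inj_on \<pi> {1..n}" by (rule eq_card_imp_inj_on) (simp_all only: im finite_atLeastAtMost)
  hence P: "\<pi> \<in> Sym n"
  proof (intro Sym_mkI)
    show "bij_betw \<pi> {1..n} {1..n}" using im \<open>inj_on \<pi> {1..n}\<close> by (simp add: bij_betw_def)
    show "i \<notin> {1..n} \<Longrightarrow> \<pi> i = i" for i by (auto simp: \<pi>_def)
  qed
  let ?l = "sorted_list_of_set S"
  have ll: "length ?l = card S" by simp
  have cS: "card S + 1 \<le> n"
  proof -
    have "S \<subseteq> {1..n} - {j}" using S j by auto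
    hence "card S \<le> card ({1..n} - {j})" by (intro card_mono) auto
    also have "\<dots> = n - 1" using j by simp
    finally have "card S \<le> n - 1" .
    thus ?thesis using j by auto
  qed
  have e1: "{1..<card S + 1} = {1..card S}" by auto
  have "\<pi> ` {1..<card S + 1} = (\<lambda>i. xs ! (i - 1)) ` {1..card S}"
    unfolding e1 using cS by (intro image_cong) (auto simp: \<pi>_def)
  also have "\<dots> = (\<lambda>i. xs ! i) ` {..<card S}"
    by (simp only: image_Suc_lessThan[symmetric] image_image diff_Suc_1)
  also have "\<dots> = (\<lambda>i. ?l ! i) ` {..<card S}"
    by (intro image_cong) (auto simp: xs_def nth_append)
  also have "\<dots> = set ?l" using ll by (auto simp: set_conv_nth)
  also have "\<dots> = S" using finS by simp
  finally have 1: "\<pi> ` {1..<card S + 1} = S" .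
  have 2: "\<pi> (card S + 1) = j" using cS by (simp add: \<pi>_def xs_def nth_append)
  show ?thesis using P 1 2 by blast
qed

lemma card_hit: "inj \<pi> \<Longrightarrow> card {s\<in>A. \<pi> s \<in> {j}} = (if j \<in> \<pi> ` A then 1 else 0)"
proof (cases "j \<in> \<pi> ` A")
  case True
  then obtain s0 where s0: "s0 \<in> A" "j = \<pi> s0" by blast
  assume "inj \<pi>"
  hence "{s\<in>A. \<pi> s \<in> {j}} = {s0}" using s0 by (auto dest: injD)
  thus ?thesis using True by simp
next
  case False
  hence "{s\<in>A. \<pi> s \<in> {j}} = {}" by auto
  then show ?thesis unfolding \<open>{s\<in>A. \<pi> s \<in> {j}} = {}\<close> using False by simp
qed

lemma Phi_cases: "A \<in> Phi n k \<Longrightarrow> A = {1..<k} \<or> A = {k} \<or> A = {k<..n}"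
  unfolding Phi_def by auto

lemma marg_iff:
  assumes p: "\<pi> \<in> Sym n" and s: "\<sigma> \<in> Sym n" and k: "k \<in> {1..n}"
  shows "marginal (Phi n k) (Psi n) \<pi> = marginal (Phi n k) (Psi n) \<sigma> \<longleftrightarrow>
         \<pi> ` {1..<k} = \<sigma> ` {1..<k} \<and> \<pi> k = \<sigma> k"
proof
  assume M: "marginal (Phi n k) (Psi n) \<pi> = marginal (Phi n k) (Psi n) \<sigma>"
  have Mv: "card {s\<in>A. \<pi> s \<in> {j}} = card {s\<in>A. \<sigma> s \<in> {j}}"
    if "A \<in> Phi n k" "j \<in> {1..n}" for A j
  proof -
    have "{j} \<in> Psi n" using that(2) by (simp add: Psi_def)
    hence "marginal (Phi n k) (Psi n) \<pi> (A, {j}) = card {s\<in>A. \<pi> s \<in> {j}}"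
          "marginal (Phi n k) (Psi n) \<sigma> (A, {j}) = card {s\<in>A. \<sigma> s \<in> {j}}"
      using that(1) by (simp_all add: marginal_def)
    thus ?thesis using M by simp
  qed
  have Mi: "(j \<in> \<pi> ` A) = (j \<in> \<sigma> ` A)" if "A \<in> Phi n k" "j \<in> {1..n}" for A j
    using Mv[OF that] unfolding card_hit[OF Sym_inj[OF p]] card_hit[OF Sym_inj[OF s]]
    by (simp split: if_splits)
  have "\<pi> ` {1..<k} = \<sigma> ` {1..<k}"
  proof (cases "k = 1")
    case True thus ?thesis by simp
  next
    case False
    hence A: "{1..<k} \<in> Phi n k" using k by (auto simp: Phi_def)
    have kk: "{1..<k} \<subseteq> {1..n}" using k by auto
    have sub: "\<pi> ` {1..<k} \<subseteq> {1..n}" "\<sigma> ` {1..<k} \<subseteq> {1..n}"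
      using Sym_image_sub[OF p kk] Sym_image_sub[OF s kk] by auto
    show ?thesis using Mi[OF A] sub by blast
  qed
  moreover have "\<pi> k = \<sigma> k"
  proof -
    have A: "{k} \<in> Phi n k" by (simp add: Phi_def)
    have "\<pi> k \<in> {1..n}" using Sym_in[OF p k] .
    from Mi[OF A this] show ?thesis by simp
  qed
  ultimately show "\<pi> ` {1..<k} = \<sigma> ` {1..<k} \<and> \<pi> k = \<sigma> k" ..
next
  assume E: "\<pi> ` {1..<k} = \<sigma> ` {1..<k} \<and> \<pi> k = \<sigma> k"
  have Ek: "\<pi> ` {1..k} = \<sigma> ` {1..k}"
  proof -
    have "{1..k} = insert k {1..<k}" using k by auto
    thus ?thesis using E by simp
  qed
  have Ik: "\<pi> ` A = \<sigma> ` A" if AP: "A \<in> Phi n k" for A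
  proof -
    consider "A = {1..<k}" | "A = {k}" | "A = {k<..n}" using Phi_cases[OF AP] by blast
    thus ?thesis
    proof cases
      case 3
      have D: "{k<..n} = {1..n} - {1..k}" using k by auto
      have "\<pi> ` {k<..n} = \<pi> ` {1..n} - \<pi> ` {1..k}"
        unfolding D by (rule image_set_diff[OF Sym_inj[OF p]])
      also have "\<dots> = \<sigma> ` {1..n} - \<sigma> ` {1..k}" using Ek Sym_image[OF p] Sym_image[OF s] by simp
      also have "\<dots> = \<sigma> ` {k<..n}"
        unfolding D by (rule image_set_diff[OF Sym_inj[OF s], symmetric])
      finally show ?thesis using 3 by simp
    qed (use E in auto)
  qed
  show "marginal (Phi n k) (Psi n) \<pi> = marginal (Phi n k) (Psi n) \<sigma>"
  proof (rule ext, clarify)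
    fix A B
    show "marginal (Phi n k) (Psi n) \<pi> (A, B) = marginal (Phi n k) (Psi n) \<sigma> (A, B)"
    proof (cases "A \<in> Phi n k \<and> B \<in> Psi n")
      case True
      then obtain j where B: "B = {j}" by (auto simp: Psi_def)
      show ?thesis using True Ik[of A] card_hit[OF Sym_inj[OF p], of A j] card_hit[OF Sym_inj[OF s], of A j]
        by (simp add: marginal_def B)
    next
      case False thus ?thesis unfolding marginal_def by auto
    qed
  qed
qed

definition Ws :: "nat \<Rightarrow> (perm \<Rightarrow> real) set" where
  "Ws n = {v. (\<forall>\<pi>. \<pi> \<notin> Sym n \<longrightarrow> v \<pi> = 0) \<and>
     (\<exists>w. \<forall>\<pi>\<in>Sym n. v \<pi> = (\<Sum>m\<in>{1..n}. w m (\<pi> ` {1..<m}) (\<pi> m)))}"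

definition ind :: "nat \<Rightarrow> nat \<Rightarrow> nat set \<Rightarrow> nat \<Rightarrow> perm \<Rightarrow> real" where
  "ind n m S j = (\<lambda>\<pi>. if \<pi> \<in> Sym n \<and> \<pi> ` {1..<m} = S \<and> \<pi> m = j then 1 else 0)"

lemma ind_U: assumes m: "m \<in> {1..n}" shows "ind n m S j \<in> U_part n (Phi n m) (Psi n)"
  unfolding U_part_def vecs_def
proof (intro CollectI conjI ballI impI allI)
  show "\<pi> \<notin> Sym n \<Longrightarrow> ind n m S j \<pi> = 0" for \<pi> by (simp add: ind_def)
  fix \<pi> \<sigma> assume p: "\<pi> \<in> Sym n" and s: "\<sigma> \<in> Sym n"
    and M: "marginal (Phi n m) (Psi n) \<pi> = marginal (Phi n m) (Psi n) \<sigma>"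
  hence "\<pi> ` {1..<m} = \<sigma> ` {1..<m} \<and> \<pi> m = \<sigma> m" using marg_iff[OF p s m] by blast
  thus "ind n m S j \<pi> = ind n m S j \<sigma>" using p s by (simp add: ind_def)
qed

lemma U_Ws: assumes m: "m \<in> {1..n}" shows "U_part n (Phi n m) (Psi n) \<subseteq> Ws n"
proof
  fix v assume v: "v \<in> U_part n (Phi n m) (Psi n)"
  define pick where "pick S j = (SOME \<sigma>. \<sigma> \<in> Sym n \<and> \<sigma> ` {1..<m} = S \<and> \<sigma> m = j)" for S j
  define w where "w m' S j = (if m' = m then v (pick S j) else 0)" for m' S j
  have "v \<pi> = (\<Sum>m'\<in>{1..n}. w m' (\<pi> ` {1..<m'}) (\<pi> m'))" if p: "\<pi> \<in> Sym n" for \<pi>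
  proof -
    have "(\<Sum>m'\<in>{1..n}. w m' (\<pi> ` {1..<m'}) (\<pi> m')) = v (pick (\<pi> ` {1..<m}) (\<pi> m))"
      using m by (simp add: w_def)
    also have "\<dots> = v \<pi>"
    proof -
      let ?s = "pick (\<pi> ` {1..<m}) (\<pi> m)"
      have "?s \<in> Sym n \<and> ?s ` {1..<m} = \<pi> ` {1..<m} \<and> ?s m = \<pi> m"
        unfolding pick_def by (rule someI[of _ \<pi>]) (simp add: p)
      hence s: "?s \<in> Sym n" and M: "marginal (Phi n m) (Psi n) ?s = marginal (Phi n m) (Psi n) \<pi>"
        using marg_iff[OF _ p m, of ?s] by auto
      show ?thesis using v s p M unfolding U_part_def by blast
    qed
    finally show ?thesis by simp
  qed
  moreover have "\<forall>\<pi>. \<pi> \<notin> Sym n \<longrightarrow> v \<pi> = 0" using v by (simp add: U_part_def vecs_def)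
  ultimately show "v \<in> Ws n" unfolding Ws_def by blast
qed

lemma Ws_subspace: "FV.subspace (Ws n)"
  unfolding FV.subspace_def
proof (intro conjI ballI allI)
  show "0 \<in> Ws n" unfolding Ws_def by (rule CollectI, rule conjI, simp, rule exI[of _ "\<lambda>_ _ _. 0"]) simp
  fix x y assume x: "x \<in> Ws n" and y: "y \<in> Ws n"
  from x obtain w1 where w1: "\<forall>\<pi>\<in>Sym n. x \<pi> = (\<Sum>m\<in>{1..n}. w1 m (\<pi> ` {1..<m}) (\<pi> m))"
    and x0: "\<forall>\<pi>. \<pi> \<notin> Sym n \<longrightarrow> x \<pi> = 0" unfolding Ws_def by blast
  from y obtain w2 where w2: "\<forall>\<pi>\<in>Sym n. y \<pi> = (\<Sum>m\<in>{1..n}. w2 m (\<pi> ` {1..<m}) (\<pi> m))"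
    and y0: "\<forall>\<pi>. \<pi> \<notin> Sym n \<longrightarrow> y \<pi> = 0" unfolding Ws_def by blast
  show "x + y \<in> Ws n" unfolding Ws_def
  proof (intro CollectI conjI)
    show "\<forall>\<pi>. \<pi> \<notin> Sym n \<longrightarrow> (x + y) \<pi> = 0" using x0 y0 by simp
    show "\<exists>w. \<forall>\<pi>\<in>Sym n. (x + y) \<pi> = (\<Sum>m\<in>{1..n}. w m (\<pi> ` {1..<m}) (\<pi> m))"
      by (rule exI[of _ "\<lambda>m S j. w1 m S j + w2 m S j"]) (simp add: w1 w2 sum.distrib)
  qed
next
  fix c and x :: "perm \<Rightarrow> real" assume x: "x \<in> Ws n"
  from x obtain w1 where w1: "\<forall>\<pi>\<in>Sym n. x \<pi> = (\<Sum>m\<in>{1..n}. w1 m (\<pi> ` {1..<m}) (\<pi> m))"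
    and x0: "\<forall>\<pi>. \<pi> \<notin> Sym n \<longrightarrow> x \<pi> = 0" unfolding Ws_def by blast
  show "fscale c x \<in> Ws n" unfolding Ws_def
  proof (intro CollectI conjI)
    show "\<forall>\<pi>. \<pi> \<notin> Sym n \<longrightarrow> fscale c x \<pi> = 0" using x0 by (simp add: fscale_def)
    show "\<exists>w. \<forall>\<pi>\<in>Sym n. fscale c x \<pi> = (\<Sum>m\<in>{1..n}. w m (\<pi> ` {1..<m}) (\<pi> m))"
      by (rule exI[of _ "\<lambda>m S j. c * w1 m S j"]) (simp add: w1 fscale_def sum_distrib_left)
  qed
qed

lemma pre_sub: assumes "\<pi> \<in> Sym n" "m \<le> n + 1" shows "\<pi> ` {1..<m} \<subseteq> {1..n}"
proof -
  have "{1..<m} \<subseteq> {1..n}" using assms(2) by auto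
  thus ?thesis by (rule Sym_image_sub[OF assms(1)])
qed

lemma Ws_expand:
  assumes v: "v \<in> Ws n"
  shows "\<exists>w. v = (\<Sum>m\<in>{1..n}. \<Sum>S\<in>Pow {1..n}. \<Sum>j\<in>{1..n}. fscale (w m S j) (ind n m S j))"
proof -
  from v obtain w where w: "\<forall>\<pi>\<in>Sym n. v \<pi> = (\<Sum>m\<in>{1..n}. w m (\<pi> ` {1..<m}) (\<pi> m))"
    and v0: "\<forall>\<pi>. \<pi> \<notin> Sym n \<longrightarrow> v \<pi> = 0" unfolding Ws_def by blast
  have "v \<pi> = (\<Sum>m\<in>{1..n}. \<Sum>S\<in>Pow {1..n}. \<Sum>j\<in>{1..n}. w m S j * ind n m S j \<pi>)" for \<pi>
  proof (cases "\<pi> \<in> Sym n")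
    case False thus ?thesis using v0 by (simp add: ind_def)
  next
    case p: True
    have "(\<Sum>S\<in>Pow {1..n}. \<Sum>j\<in>{1..n}. w m S j * ind n m S j \<pi>) = w m (\<pi> ` {1..<m}) (\<pi> m)"
      if m: "m \<in> {1..n}" for m
    proof -
      have in1: "\<pi> ` {1..<m} \<in> Pow {1..n}" using pre_sub[OF p, of m] m by simp
      have in2: "\<pi> m \<in> {1..n}" using Sym_in[OF p m] .
      let ?a = "\<pi> ` {1..<m}" and ?b = "\<pi> m"
      have ie: "ind n m S j \<pi> = (if S = ?a \<and> j = ?b then 1 else 0)" for S j
        by (auto simp: ind_def p)
      have "(\<Sum>S\<in>Pow {1..n}. \<Sum>j\<in>{1..n}. w m S j * ind n m S j \<pi>)
          = (\<Sum>S\<in>Pow {1..n}. if S = ?a then w m S ?b else 0)"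
      proof (rule sum.cong[OF refl])
        fix S
        show "(\<Sum>j\<in>{1..n}. w m S j * ind n m S j \<pi>) = (if S = ?a then w m S ?b else 0)"
        proof (cases "S = ?a")
          case True
          have "(\<Sum>j\<in>{1..n}. w m S j * ind n m S j \<pi>) = (\<Sum>j\<in>{1..n}. if j = ?b then w m S j else 0)"
            by (rule sum.cong[OF refl]) (simp add: ie True)
          also have "\<dots> = w m S ?b" using in2 by (simp add: sum.delta')
          finally show ?thesis using True by simp
        next
          case False thus ?thesis by (simp add: ie)
        qed
      qed
      also have "\<dots> = w m (\<pi> ` {1..<m}) (\<pi> m)"
        using in1 by (simp add: sum.delta')
      finally show ?thesis .
    qed
    thus ?thesis using w p by simp
  qed
  hence "v = (\<Sum>m\<in>{1..n}. \<Sum>S\<in>Pow {1..n}. \<Sum>j\<in>{1..n}. fscale (w m S j) (ind n m S j))"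
    by (intro ext) (simp add: sum_fun_apply fscale_def)
  thus ?thesis by blast
qed

lemma Ws_in_span:
  assumes v: "v \<in> Ws n" and F: "\<And>m S j. m \<in> {1..n} \<Longrightarrow> ind n m S j \<in> FV.span X"
  shows "v \<in> FV.span X"
proof -
  obtain w where "v = (\<Sum>m\<in>{1..n}. \<Sum>S\<in>Pow {1..n}. \<Sum>j\<in>{1..n}. fscale (w m S j) (ind n m S j))"
    using Ws_expand[OF v] by blast
  also have "\<dots> \<in> FV.span X"
    by (intro FV.span_sum FV.span_scale F)
  finally show ?thesis .
qed

lemma U_model_Ws: "U_model n ((\<lambda>k. (Phi n k, Psi n)) ` {1..n}) = Ws n"
proof -
  have eqU: "(\<Union>(R,C)\<in>(\<lambda>k. (Phi n k, Psi n)) ` {1..n}. U_part n R C) = (\<Union>k\<in>{1..n}. U_part n (Phi n k) (Psi n))"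
    by auto
  show ?thesis unfolding U_model_def eqU
  proof
    show "FV.span (\<Union>k\<in>{1..n}. U_part n (Phi n k) (Psi n)) \<subseteq> Ws n"
    proof (rule FV.span_minimal)
      show "(\<Union>k\<in>{1..n}. U_part n (Phi n k) (Psi n)) \<subseteq> Ws n" using U_Ws by (simp add: UN_subset_iff)
    qed (rule Ws_subspace)
    show "Ws n \<subseteq> FV.span (\<Union>k\<in>{1..n}. U_part n (Phi n k) (Psi n))"
    proof
      fix v assume "v \<in> Ws n"
      thus "v \<in> FV.span (\<Union>k\<in>{1..n}. U_part n (Phi n k) (Psi n))"
        by (rule Ws_in_span) (rule FV.span_base, use ind_U in blast)
    qed
  qed
qed

definition constf :: "nat \<Rightarrow> perm \<Rightarrow> real" where
  "constf n = (\<lambda>\<pi>. if \<pi> \<in> Sym n then 1 else 0)"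

definition g :: "nat \<Rightarrow> nat set \<times> nat \<Rightarrow> perm \<Rightarrow> real" where
  "g n e = ind n (card (fst e) + 1) (fst e) (snd e)"

definition E :: "nat \<Rightarrow> (nat set \<times> nat) set" where
  "E n = {(S,j). S \<subseteq> {1..n} \<and> j \<in> {1..n} \<and> j \<notin> S \<and> (\<exists>s\<in>S. j < s)}"

definition Bas :: "nat \<Rightarrow> (perm \<Rightarrow> real) set" where
  "Bas n = insert (constf n) (g n ` E n)"

definition Iset :: "nat \<Rightarrow> nat set \<Rightarrow> perm \<Rightarrow> real" where
  "Iset n T = (\<lambda>\<pi>. if \<pi> \<in> Sym n \<and> \<pi> ` {1..card T} = T then 1 else 0)"

lemma card_pre: assumes p: "\<pi> \<in> Sym n" shows "card (\<pi> ` {1..<m}) = m - 1"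
proof -
  have "inj_on \<pi> {1..<m}" by (rule inj_on_subset[OF Sym_inj[OF p]]) simp
  thus ?thesis by (simp add: card_image)
qed

lemma notin_pre: assumes p: "\<pi> \<in> Sym n" shows "\<pi> m \<notin> \<pi> ` {1..<m}"
proof
  assume "\<pi> m \<in> \<pi> ` {1..<m}"
  then obtain x where x: "x \<in> {1..<m}" "\<pi> m = \<pi> x" by auto
  hence "m = x" using Sym_inj[OF p] by (simp add: inj_eq)
  thus False using x(1) by simp
qed

lemma edge_card:
  assumes a: "S \<subseteq> {1..n}" "j \<in> {1..n}" "j \<notin> S" shows "card S + 1 \<le> n"
proof -
  have "insert j S \<subseteq> {1..n}" using a by auto
  hence "card (insert j S) \<le> n" using card_mono[of "{1..n}" "insert j S"] by simp
  moreover have "finite S" using a(1) finite_subset by blast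
  ultimately show ?thesis using a(3) by simp
qed

lemma ind_zero:
  assumes m: "m \<in> {1..n}" and nv: "\<not> (S \<subseteq> {1..n} \<and> j \<in> {1..n} \<and> j \<notin> S \<and> card S + 1 = m)"
  shows "ind n m S j = 0"
proof -
  have "ind n m S j \<pi> = 0" for \<pi>
  proof (rule ccontr)
    assume "ind n m S j \<pi> \<noteq> 0"
    hence p: "\<pi> \<in> Sym n" and S: "\<pi> ` {1..<m} = S" and j: "\<pi> m = j" by (auto simp: ind_def split: if_splits)
    have "S \<subseteq> {1..n}" using pre_sub[OF p, of m] m S by simp
    moreover have "j \<in> {1..n}" using Sym_in[OF p m] j by simp
    moreover have "j \<notin> S" using notin_pre[OF p, of m] S j by simp
    moreover have "card S + 1 = m" using card_pre[OF p, of m] S m by simp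
    ultimately show False using nv by blast
  qed
  thus ?thesis by (simp add: fun_eq_iff)
qed

lemma g_apply: "g n (S,j) \<pi> = (if \<pi> \<in> Sym n \<and> \<pi> ` {1..<card S + 1} = S \<and> \<pi> (card S + 1) = j then 1 else 0)"
  by (simp add: g_def ind_def)

lemma g_apply2: "g n (S,j) \<pi> = (if \<pi> \<in> Sym n \<and> \<pi> ` {1..card S} = S \<and> \<pi> (card S + 1) = j then 1 else 0)"
  by (simp add: g_def ind_def atLeastLessThanSuc_atLeastAtMost)

lemma R1:
  assumes T: "T \<subseteq> {1..n}" and c: "card T < n"
  shows "Iset n T = (\<Sum>x\<in>{1..n} - T. g n (T,x))"
proof (rule ext)
  fix \<pi>
  show "Iset n T \<pi> = (\<Sum>x\<in>{1..n} - T. g n (T,x)) \<pi>"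
  proof (cases "\<pi> \<in> Sym n \<and> \<pi> ` {1..card T} = T")
    case False
    have e: "{1..<card T + 1} = {1..card T}" by auto
    have "g n (T,x) \<pi> = 0" for x using False by (auto simp: g_apply2)
    thus ?thesis using False by (simp add: Iset_def sum_fun_apply)
  next
    case True
    hence p: "\<pi> \<in> Sym n" and P: "\<pi> ` {1..card T} = T" by auto
    have e: "{1..<card T + 1} = {1..card T}" by auto
    let ?b = "\<pi> (card T + 1)"
    have b: "?b \<in> {1..n} - T"
    proof -
      have "?b \<in> {1..n}" using Sym_in[OF p] c by simp
      moreover have "?b \<notin> \<pi> ` {1..<card T + 1}" by (rule notin_pre[OF p])
      ultimately show ?thesis using P e by simp
    qed
    have P': "\<pi> ` {Suc 0..card T} = T" using P by simp
    have "(\<Sum>x\<in>{1..n} - T. g n (T,x)) \<pi> = (\<Sum>x\<in>{1..n} - T. if ?b = x then 1 else 0)"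
      unfolding sum_fun_apply by (rule sum.cong[OF refl]) (simp add: g_apply2 P P' p)
    also have "\<dots> = 1" using b by simp
    finally show ?thesis using True by (simp add: Iset_def)
  qed
qed

lemma R2:
  assumes T: "T \<subseteq> {1..n}" and ne: "T \<noteq> {}"
  shows "Iset n T = (\<Sum>j\<in>T. g n (T - {j}, j))"
proof (rule ext)
  fix \<pi>
  have fT: "finite T" using T finite_subset by blast
  let ?c = "card T"
  have c1: "?c \<ge> 1" using fT ne by (simp add: Suc_le_eq card_gt_0_iff)
  have cj: "card (T - {j}) + 1 = ?c" if "j \<in> T" for j using that fT c1 by simp
  show "Iset n T \<pi> = (\<Sum>j\<in>T. g n (T - {j}, j)) \<pi>"
  proof (cases "\<pi> \<in> Sym n")
    case False thus ?thesis by (simp add: Iset_def sum_fun_apply g_apply)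
  next
    case p: True
    have ins: "\<pi> ` {1..?c} = insert (\<pi> ?c) (\<pi> ` {1..<?c})"
    proof -
      have "{1..?c} = insert ?c {1..<?c}" using c1 by auto
      thus ?thesis by simp
    qed
    have nin: "\<pi> ?c \<notin> \<pi> ` {1..<?c}" by (rule notin_pre[OF p])
    have "(\<Sum>j\<in>T. g n (T - {j}, j)) \<pi> = (\<Sum>j\<in>T. if j = \<pi> ?c then (if \<pi> ` {1..<?c} = T - {\<pi> ?c} then 1 else 0) else 0)"
      unfolding sum_fun_apply
    proof (rule sum.cong[OF refl])
      fix j assume jT: "j \<in> T"
      have cc: "card (T - {j}) + 1 = ?c" using cj[OF jT] .
      show "g n (T - {j}, j) \<pi> = (if j = \<pi> ?c then (if \<pi> ` {1..<?c} = T - {\<pi> ?c} then 1 else 0) else 0)"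
        unfolding g_apply cc by (cases "j = \<pi> ?c") (simp_all add: p)
    qed
    also have "\<dots> = (if \<pi> ?c \<in> T then (if \<pi> ` {1..<?c} = T - {\<pi> ?c} then 1 else 0) else 0)"
      using fT by (simp add: sum.delta')
    also have "\<dots> = (if \<pi> ` {1..?c} = T then 1 else 0)"
    proof -
      have "(\<pi> ?c \<in> T \<and> \<pi> ` {1..<?c} = T - {\<pi> ?c}) \<longleftrightarrow> \<pi> ` {1..?c} = T"
        unfolding ins using nin by blast
      thus ?thesis by auto
    qed
    finally show ?thesis using p by (simp add: Iset_def)
  qed
qed

lemma R3: "Iset n {1..n} = constf n"
proof (rule ext)
  fix \<pi> show "Iset n {1..n} \<pi> = constf n \<pi>"
  proof (cases "\<pi> \<in> Sym n")
    case True
    then have "\<pi> ` {1..n} = {1..n}" by (rule Sym_image)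
    thus ?thesis using True by (simp add: Iset_def constf_def)
  next
    case False thus ?thesis by (simp add: Iset_def constf_def)
  qed
qed

lemma edge_span:
  assumes S: "S \<subseteq> {1..n}" and j: "j \<in> {1..n}" "j \<notin> S"
    and I: "Iset n (insert j S) \<in> FV.span (Bas n)"
  shows "g n (S,j) \<in> FV.span (Bas n)"
proof (cases "(S,j) \<in> E n")
  case True thus ?thesis by (intro FV.span_base) (simp add: Bas_def)
next
  case False
  hence lt: "\<forall>s\<in>S. s < j" using S j by (auto simp: E_def not_less_iff_gr_or_eq) 
  let ?T = "insert j S"
  have fS: "finite S" using S finite_subset by blast
  have Tsub: "?T \<subseteq> {1..n}" using S j by auto
  have TS: "?T - {j} = S" using j(2) by auto
  have h1: "Iset n ?T = (\<Sum>i\<in>?T. g n (?T - {i}, i))" by (rule R2[OF Tsub]) simp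
  have h2: "(\<Sum>i\<in>?T. g n (?T - {i}, i)) = g n (?T - {j}, j) + (\<Sum>i\<in>S. g n (?T - {i}, i))"
    by (rule sum.insert[OF fS j(2)])
  have h: "Iset n ?T = g n (S, j) + (\<Sum>i\<in>S. g n (?T - {i}, i))"
    using h1 h2 TS by metis
  have eq: "g n (S,j) = Iset n ?T - (\<Sum>i\<in>S. g n (?T - {i}, i))"
    unfolding h by (rule add_diff_cancel_right'[symmetric])
  have "g n (?T - {i}, i) \<in> FV.span (Bas n)" if i: "i \<in> S" for i
  proof (rule FV.span_base)
    have "(?T - {i}, i) \<in> E n" unfolding E_def using i S j lt by auto
    thus "g n (?T - {i}, i) \<in> Bas n" by (simp add: Bas_def)
  qed
  hence "(\<Sum>i\<in>S. g n (?T - {i}, i)) \<in> FV.span (Bas n)" by (rule FV.span_sum)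
  thus ?thesis unfolding eq using I by (rule FV.span_diff[rotated])
qed

lemma I_span: "T \<subseteq> {1..n} \<Longrightarrow> Iset n T \<in> FV.span (Bas n)"
proof (induction "n - card T" arbitrary: T rule: less_induct)
  case less
  note T = less.prems
  have fT: "finite T" using T finite_subset by blast
  have cle: "card T \<le> n" using card_mono[OF _ T] by simp
  show ?case
  proof (cases "card T = n")
    case True
    hence "T = {1..n}" using card_subset_eq[OF _ T] by simp
    thus ?thesis using R3 by (simp add: Bas_def FV.span_base)
  next
    case False
    hence c: "card T < n" using cle by simp
    have "g n (T,x) \<in> FV.span (Bas n)" if x: "x \<in> {1..n} - T" for x
    proof (rule edge_span)
      show "Iset n (insert x T) \<in> FV.span (Bas n)"
      proof (rule less.hyps)
        show "n - card (insert x T) < n - card T" using x fT c by simp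
        show "insert x T \<subseteq> {1..n}" using x T by simp
      qed
    qed (use x T in auto)
    hence "(\<Sum>x\<in>{1..n} - T. g n (T,x)) \<in> FV.span (Bas n)" by (rule FV.span_sum)
    thus ?thesis using R1[OF T c] by simp
  qed
qed

lemma ind_span: assumes m: "m \<in> {1..n}" shows "ind n m S j \<in> FV.span (Bas n)"
proof (cases "S \<subseteq> {1..n} \<and> j \<in> {1..n} \<and> j \<notin> S \<and> card S + 1 = m")
  case True
  hence "ind n m S j = g n (S,j)" by (simp add: g_def)
  moreover have "g n (S,j) \<in> FV.span (Bas n)"
    using True by (intro edge_span I_span) auto
  ultimately show ?thesis by simp
next
  case False thus ?thesis using ind_zero[OF m] FV.span_zero by simp
qed

lemma Bas_Ws: assumes n: "n \<ge> 1" shows "Bas n \<subseteq> Ws n"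
proof
  fix b assume "b \<in> Bas n"
  then consider "b = constf n" | e where "e \<in> E n" "b = g n e" by (auto simp: Bas_def)
  thus "b \<in> Ws n"
  proof cases
    case 1
    have "constf n \<in> U_part n (Phi n 1) (Psi n)"
      by (auto simp: U_part_def vecs_def constf_def)
    thus ?thesis using U_Ws[of 1 n] n 1 by auto
  next
    case (2 e)
    obtain S j where e: "e = (S,j)" by force
    have "S \<subseteq> {1..n}" "j \<in> {1..n}" "j \<notin> S" using 2 e by (auto simp: E_def)
    hence "card S + 1 \<in> {1..n}" using edge_card by auto
    hence "ind n (card S + 1) S j \<in> Ws n" using ind_U U_Ws by blast
    thus ?thesis using 2 e by (simp add: g_def)
  qed
qed

lemma span_Bas: assumes n: "n \<ge> 1" shows "FV.span (Bas n) = Ws n"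
proof (rule FV.span_subspace[OF Bas_Ws[OF n] _ Ws_subspace])
  show "Ws n \<subseteq> FV.span (Bas n)"
  proof
    fix v assume "v \<in> Ws n"
    thus "v \<in> FV.span (Bas n)" by (rule Ws_in_span) (rule ind_span)
  qed
qed

lemma finite_E: "finite (E n)"
proof -
  have "E n \<subseteq> Pow {1..n} \<times> {1..n}" by (auto simp: E_def)
  thus ?thesis by (rule finite_subset) simp
qed

lemma id_Sym: "id \<in> Sym n" by (simp add: Sym_def permutes_id)

locale indep_ctx =
  fixes n :: nat and c0 :: real and c :: "nat set \<times> nat \<Rightarrow> real"
  assumes n: "n \<ge> 1"
    and Z: "\<forall>\<pi>\<in>Sym n. c0 + (\<Sum>e\<in>E n. c e * g n e \<pi>) = 0"
begin

definition h :: "perm \<Rightarrow> nat \<Rightarrow> real" where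
  "h \<pi> m = (if (\<pi> ` {1..<m}, \<pi> m) \<in> E n then c (\<pi> ` {1..<m}, \<pi> m) else 0)"

definition phi :: "perm \<Rightarrow> nat \<Rightarrow> real" where
  "phi \<pi> k = (\<Sum>m\<in>{1..k}. h \<pi> m)"

lemma pos: assumes p: "\<pi> \<in> Sym n"
  shows "(\<Sum>e\<in>E n. c e * g n e \<pi>) = (\<Sum>m\<in>{1..n}. h \<pi> m)"
proof -
  define key where "key m = (\<pi> ` {1..<m}, \<pi> m)" for m
  define P where "P = {m\<in>{1..n}. key m \<in> E n}"
  define Q where "Q e = (\<pi> ` {1..<card (fst e) + 1} = fst e \<and> \<pi> (card (fst e) + 1) = snd e)" for e
  have injk: "inj_on key P"
  proof (rule inj_onI)
    fix x y assume "key x = key y"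
    hence "\<pi> x = \<pi> y" by (simp add: key_def)
    thus "x = y" using Sym_inj[OF p] by (simp add: inj_eq)
  qed
  have "(\<Sum>m\<in>{1..n}. h \<pi> m) = (\<Sum>m\<in>{1..n}. if key m \<in> E n then c (key m) else 0)"
    unfolding h_def key_def ..
  also have "\<dots> = (\<Sum>m\<in>P. c (key m))" unfolding P_def by (rule sum.inter_filter[symmetric]) simp
  also have "\<dots> = (\<Sum>e\<in>key ` P. c e)" by (simp add: sum.reindex[OF injk])
  also have "key ` P = {e\<in>E n. Q e}"
  proof
    show "key ` P \<subseteq> {e\<in>E n. Q e}"
    proof
      fix e assume "e \<in> key ` P"
      then obtain m where m: "m \<in> {1..n}" "key m \<in> E n" "e = key m" by (auto simp: P_def)
      have "card (\<pi> ` {1..<m}) + 1 = m" using card_pre[OF p, of m] m(1) by simp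
      hence "Q e" using m(3) by (simp add: Q_def key_def)
      thus "e \<in> {e\<in>E n. Q e}" using m by simp
    qed
    show "{e\<in>E n. Q e} \<subseteq> key ` P"
    proof
      fix e assume e: "e \<in> {e\<in>E n. Q e}"
      obtain S j where Sj: "e = (S,j)" by force
      have ed: "S \<subseteq> {1..n}" "j \<in> {1..n}" "j \<notin> S" using e Sj by (auto simp: E_def)
      let ?m = "card S + 1"
      have "?m \<in> {1..n}" using edge_card[OF ed] by simp
      moreover have "key ?m = e" using e Sj by (simp add: key_def Q_def)
      ultimately show "e \<in> key ` P" using e by (auto simp: P_def intro!: image_eqI[of _ _ ?m])
    qed
  qed
  also have "(\<Sum>e\<in>{e\<in>E n. Q e}. c e) = (\<Sum>e\<in>E n. if Q e then c e else 0)"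
    by (simp add: sum.inter_filter finite_E)
  also have "\<dots> = (\<Sum>e\<in>E n. c e * g n e \<pi>)"
    by (rule sum.cong[OF refl]) (auto simp: Q_def g_def ind_def p)
  finally show ?thesis by simp
qed

lemma total: "\<pi> \<in> Sym n \<Longrightarrow> c0 + (\<Sum>m\<in>{1..n}. h \<pi> m) = 0"
  using Z pos by simp

lemma WD:
  assumes p: "\<pi> \<in> Sym n" and s: "\<sigma> \<in> Sym n" and k: "k \<le> n"
    and eq: "\<pi> ` {1..k} = \<sigma> ` {1..k}"
  shows "phi \<pi> k = phi \<sigma> k"
proof -
  define \<tau> where "\<tau> = (\<lambda>i. if i \<in> {1..k} then \<pi> i else \<sigma> i)"
  have t: "\<tau> \<in> Sym n" unfolding \<tau>_def by (rule splice_Sym[OF p s k eq])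
  have U: "{1..n} = {1..k} \<union> {k<..n}" using k by auto
  have D: "{1..k} \<inter> {k<..n} = {}" by auto
  have split: "(\<Sum>m\<in>{1..n}. h \<rho> m) = phi \<rho> k + (\<Sum>m\<in>{k<..n}. h \<rho> m)" for \<rho>
    unfolding U phi_def by (rule sum.union_disjoint) (use D in auto)
  have h1: "h \<tau> m = h \<pi> m" if m: "m \<in> {1..k}" for m
  proof -
    have "\<tau> ` {1..<m} = \<pi> ` {1..<m}" using m by (intro image_cong) (auto simp: \<tau>_def)
    moreover have "\<tau> m = \<pi> m" using m by (simp add: \<tau>_def)
    ultimately show ?thesis by (simp add: h_def)
  qed
  have h2: "h \<tau> m = h \<sigma> m" if m: "m \<in> {k<..n}" for m
  proof -
    have Um: "{1..<m} = {1..k} \<union> {k<..<m}" using m by auto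
    have "\<tau> ` {1..k} = \<sigma> ` {1..k}"
    proof -
      have "\<tau> ` {1..k} = \<pi> ` {1..k}" by (intro image_cong) (auto simp: \<tau>_def)
      thus ?thesis using eq by simp
    qed
    moreover have "\<tau> ` {k<..<m} = \<sigma> ` {k<..<m}" by (intro image_cong) (auto simp: \<tau>_def)
    ultimately have "\<tau> ` {1..<m} = \<sigma> ` {1..<m}" unfolding Um image_Un by simp
    moreover have "\<tau> m = \<sigma> m" using m by (simp add: \<tau>_def)
    ultimately show ?thesis by (simp add: h_def)
  qed
  have "phi \<tau> k = phi \<pi> k" unfolding phi_def by (rule sum.cong[OF refl h1])
  moreover have "(\<Sum>m\<in>{k<..n}. h \<tau> m) = (\<Sum>m\<in>{k<..n}. h \<sigma> m)" by (rule sum.cong[OF refl h2])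
  moreover have "c0 + (phi \<tau> k + (\<Sum>m\<in>{k<..n}. h \<tau> m)) = 0" using total[OF t] split[of \<tau>] by simp
  moreover have "c0 + (phi \<sigma> k + (\<Sum>m\<in>{k<..n}. h \<sigma> m)) = 0" using total[OF s] split[of \<sigma>] by simp
  ultimately show ?thesis by simp
qed

lemma phi_step: "k \<ge> 1 \<Longrightarrow> phi \<rho> k = phi \<rho> (k - 1) + h \<rho> k"
proof -
  assume k: "k \<ge> 1"
  have "{1..k} = insert k {1..k - 1}" using k by auto
  moreover have "k \<notin> {1..k - 1}" using k by auto
  ultimately show ?thesis unfolding phi_def by (simp add: add.commute)
qed

lemma claim:
  assumes T: "T \<subseteq> {1..n}" "T \<noteq> {}" and p: "\<pi> \<in> Sym n" and pT: "\<pi> ` {1..card T} = T"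
  shows "phi \<pi> (card T) = 0"
  using T p pT
proof (induction "card T" arbitrary: T \<pi> rule: less_induct)
  case less
  have fT: "finite T" using less.prems(1) finite_subset by blast
  have cT: "card T \<ge> 1" using fT less.prems(2) by (simp add: Suc_le_eq card_gt_0_iff)
  show ?case
  proof (cases "card T = 1")
    case True
    have "h \<pi> 1 = 0" by (simp add: h_def E_def)
    thus ?thesis using True by (simp add: phi_def)
  next
    case False
    hence c2: "card T \<ge> 2" using cT by simp
    define x where "x = Max T"
    define S where "S = T - {x}"
    have xT: "x \<in> T" using Max_in[OF fT less.prems(2)] by (simp add: x_def)
    have cS: "card S = card T - 1" using xT fT by (simp add: S_def)
    have Sne: "S \<noteq> {}" using cS c2 by auto
    have Ssub: "S \<subseteq> {1..n}" using less.prems(1) by (auto simp: S_def)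
    have xn: "x \<in> {1..n}" "x \<notin> S" using xT less.prems(1) by (auto simp: S_def)
    obtain \<rho> where r: "\<rho> \<in> Sym n" "\<rho> ` {1..<card S + 1} = S" "\<rho> (card S + 1) = x"
      using exists_perm_prefix[OF Ssub xn] by blast
    have kk: "card S + 1 = card T" using cS c2 by simp
    have rT: "\<rho> ` {1..card T} = T"
    proof -
      have "{1..card T} = insert (card S + 1) {1..<card S + 1}" using kk by auto
      hence "\<rho> ` {1..card T} = insert x S" using r by simp
      thus ?thesis using xT by (auto simp: S_def)
    qed
    have le: "card T \<le> n" using card_mono[OF _ less.prems(1)] by simp
    have "phi \<pi> (card T) = phi \<rho> (card T)"
      using WD[OF less.prems(3) r(1) le] less.prems(4) rT by simp
    also have "\<dots> = phi \<rho> (card S) + h \<rho> (card T)"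
      using phi_step[of "card T" \<rho>] cT cS by simp
    also have "h \<rho> (card T) = 0"
    proof -
      have "\<forall>s\<in>S. s < x" using fT by (auto simp: S_def x_def less_le)
      hence "(S, x) \<notin> E n" by (auto simp: E_def)
      thus ?thesis using r kk[symmetric] by (simp add: h_def)
    qed
    also have "phi \<rho> (card S) = 0"
    proof (rule less.hyps)
      show "card S < card T" using cS cT by simp
      show "\<rho> ` {1..card S} = S" using r(2) by (simp add: atLeastLessThanSuc_atLeastAtMost)
    qed (use Ssub Sne r in auto)
    finally show ?thesis by simp
  qed
qed

lemma c0_zero: "c0 = 0"
proof -
  have "phi id n = 0"
    using claim[of "{1..n}" id] n id_Sym by simp
  thus ?thesis using total[OF id_Sym] by (simp add: phi_def)
qed

lemma c_zero: assumes e: "e \<in> E n" shows "c e = 0"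
proof -
  obtain S j where Sj: "e = (S,j)" by force
  have ed: "S \<subseteq> {1..n}" "j \<in> {1..n}" "j \<notin> S" and Sne: "S \<noteq> {}" using e Sj by (auto simp: E_def)
  obtain \<rho> where r: "\<rho> \<in> Sym n" "\<rho> ` {1..<card S + 1} = S" "\<rho> (card S + 1) = j"
    using exists_perm_prefix[OF ed] by blast
  have fS: "finite S" using ed(1) finite_subset by blast
  let ?T = "insert j S"
  have cT: "card ?T = card S + 1" using fS ed(3) by simp
  have rT: "\<rho> ` {1..card ?T} = ?T"
  proof -
    have "{1..card ?T} = insert (card S + 1) {1..<card S + 1}" using cT by auto
    thus ?thesis using r by simp
  qed
  have "phi \<rho> (card ?T) = 0" by (rule claim) (use ed r(1) rT in auto)
  moreover have "phi \<rho> (card S) = 0"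
    by (rule claim) (use ed Sne r in \<open>auto simp: atLeastLessThanSuc_atLeastAtMost\<close>)
  moreover have "phi \<rho> (card ?T) = phi \<rho> (card S) + h \<rho> (card S + 1)"
    using phi_step[of "card ?T" \<rho>] cT by simp
  moreover have "h \<rho> (card S + 1) = c e" using r e Sj by (simp add: h_def)
  ultimately show ?thesis by simp
qed

end

lemma IND:
  assumes n: "n \<ge> 1" and Z: "\<forall>\<pi>\<in>Sym n. c0 + (\<Sum>e\<in>E n. c e * g n e \<pi>) = 0"
  shows "c0 = 0 \<and> (\<forall>e\<in>E n. c e = 0)"
proof -
  interpret indep_ctx n c0 c using n Z by unfold_locales
  show ?thesis using c0_zero c_zero by blast
qed

lemma inj_g: assumes n: "n \<ge> 1" shows "inj_on (g n) (E n)"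
proof (rule inj_onI)
  fix e1 e2 assume e1: "e1 \<in> E n" and e2: "e2 \<in> E n" and eq: "g n e1 = g n e2"
  show "e1 = e2"
  proof (rule ccontr)
    assume ne: "e1 \<noteq> e2"
    define c where "c e = (if e = e1 then 1 else if e = e2 then -1 else (0::real))" for e
    have "\<forall>\<pi>\<in>Sym n. 0 + (\<Sum>e\<in>E n. c e * g n e \<pi>) = 0"
    proof
      fix \<pi>
      have "(\<Sum>e\<in>E n. c e * g n e \<pi>) = (\<Sum>e\<in>E n. (if e = e1 then g n e1 \<pi> else 0) + (if e = e2 then - g n e2 \<pi> else 0))"
        by (rule sum.cong[OF refl]) (use ne in \<open>auto simp: c_def\<close>)
      also have "\<dots> = g n e1 \<pi> - g n e2 \<pi>"
        using e1 e2 finite_E by (simp add: sum.distrib)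
      also have "\<dots> = 0" using eq by simp
      finally show "0 + (\<Sum>e\<in>E n. c e * g n e \<pi>) = 0" by simp
    qed
    hence "\<forall>e\<in>E n. c e = 0" using IND[OF n] by blast
    hence "c e1 = 0" using e1 by blast
    thus False by (simp add: c_def)
  qed
qed

lemma const_notin: assumes n: "n \<ge> 1" shows "constf n \<notin> g n ` E n"
proof
  assume "constf n \<in> g n ` E n"
  then obtain e0 where e0: "e0 \<in> E n" "constf n = g n e0" by blast
  define c where "c e = (if e = e0 then -1 else (0::real))" for e
  have "\<forall>\<pi>\<in>Sym n. 1 + (\<Sum>e\<in>E n. c e * g n e \<pi>) = 0"
  proof
    fix \<pi> assume p: "\<pi> \<in> Sym n"
    have "(\<Sum>e\<in>E n. c e * g n e \<pi>) = (\<Sum>e\<in>E n. if e = e0 then - g n e0 \<pi> else 0)"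
      by (rule sum.cong[OF refl]) (auto simp: c_def)
    also have "\<dots> = - g n e0 \<pi>" using e0 finite_E by simp
    also have "\<dots> = -1" using e0(2) p by (simp add: constf_def fun_eq_iff) (metis)
    finally show "1 + (\<Sum>e\<in>E n. c e * g n e \<pi>) = 0" by simp
  qed
  hence "(1::real) = 0" using IND[OF n] by blast
  thus False by simp
qed

lemma finite_Bas: "finite (Bas n)" by (simp add: Bas_def finite_E)

lemma indep_Bas: assumes n: "n \<ge> 1" shows "FV.independent (Bas n)"
proof (rule FV.independent_if_scalars_zero[OF finite_Bas])
  fix f :: "(perm \<Rightarrow> real) \<Rightarrow> real" and x
  assume S: "(\<Sum>x\<in>Bas n. fscale (f x) x) = 0" and x: "x \<in> Bas n"
  have "(\<Sum>x\<in>Bas n. fscale (f x) x) = fscale (f (constf n)) (constf n) + (\<Sum>x\<in>g n ` E n. fscale (f x) x)"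
    unfolding Bas_def by (rule sum.insert) (simp_all add: finite_E const_notin[OF n])
  also have "(\<Sum>x\<in>g n ` E n. fscale (f x) x) = (\<Sum>e\<in>E n. fscale (f (g n e)) (g n e))"
    by (rule sum.reindex[OF inj_g[OF n], unfolded comp_def])
  finally have S1: "(\<Sum>x\<in>Bas n. fscale (f x) x) = fscale (f (constf n)) (constf n) + (\<Sum>e\<in>E n. fscale (f (g n e)) (g n e))" .
  have S2: "fscale (f (constf n)) (constf n) + (\<Sum>e\<in>E n. fscale (f (g n e)) (g n e)) = 0"
    using S1 S by metis
  have "\<forall>\<pi>\<in>Sym n. f (constf n) + (\<Sum>e\<in>E n. f (g n e) * g n e \<pi>) = 0"
  proof
    fix \<pi> assume p: "\<pi> \<in> Sym n"
    have "(fscale (f (constf n)) (constf n) + (\<Sum>e\<in>E n. fscale (f (g n e)) (g n e))) \<pi> = 0"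
      using S2 by (simp only: zero_fun_apply)
    thus "f (constf n) + (\<Sum>e\<in>E n. f (g n e) * g n e \<pi>) = 0"
      using p by (simp add: sum_fun_apply fscale_def constf_def)
  qed
  from IND[OF n this] have "f (constf n) = 0" "\<forall>e\<in>E n. f (g n e) = 0" by auto
  thus "f x = 0" using x by (auto simp: Bas_def)
qed

lemma card_Bas: assumes n: "n \<ge> 1" shows "card (Bas n) = card (E n) + 1"
proof -
  have "card (Bas n) = Suc (card (g n ` E n))"
    unfolding Bas_def by (rule card_insert_disjoint) (simp_all add: finite_E const_notin[OF n])
  also have "card (g n ` E n) = card (E n)" by (rule card_image[OF inj_g[OF n]])
  finally show ?thesis by simp
qed

lemma dim_U: assumes n: "n \<ge> 1"
  shows "fdim (U_model n ((\<lambda>k. (Phi n k, Psi n)) ` {1..n})) = card (E n) + 1"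
proof -
  have "fdim (U_model n ((\<lambda>k. (Phi n k, Psi n)) ` {1..n})) = fdim (FV.span (Bas n))"
    unfolding U_model_Ws span_Bas[OF n] ..
  also have "\<dots> = fdim (Bas n)" by (rule FV.dim_span)
  also have "\<dots> = card (Bas n)" by (rule FV.dim_eq_card_independent[OF indep_Bas[OF n]])
  finally show ?thesis using card_Bas[OF n] by simp
qed

lemma card_notmax: fixes T :: "nat set" assumes fT: "finite T" shows "card {j\<in>T. \<exists>s\<in>T. j < s} = card T - 1"
proof (cases "T = {}")
  case True thus ?thesis by simp
next
  case False
  have "{j\<in>T. \<exists>s\<in>T. j < s} = T - {Max T}"
  proof
    show "{j\<in>T. \<exists>s\<in>T. j < s} \<subseteq> T - {Max T}"
      using fT by (auto simp: not_less dest: Max_ge)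
    show "T - {Max T} \<subseteq> {j\<in>T. \<exists>s\<in>T. j < s}"
    proof
      fix j assume j: "j \<in> T - {Max T}"
      hence "j \<le> Max T" "j \<noteq> Max T" using Max_ge[OF fT, of j] by auto
      hence "j < Max T" by simp
      thus "j \<in> {j\<in>T. \<exists>s\<in>T. j < s}" using j Max_in[OF fT False] by auto
    qed
  qed
  thus ?thesis using Max_in[OF fT False] fT by simp
qed

lemma sum_Pow_card:
  fixes f :: "nat \<Rightarrow> nat"
  assumes A: "finite A"
  shows "(\<Sum>T\<in>Pow A. f (card T)) = (\<Sum>k\<le>card A. (card A choose k) * f k)"
proof -
  have "(\<Sum>T\<in>Pow A. f (card T)) = (\<Sum>k\<le>card A. \<Sum>T\<in>{T. T \<in> Pow A \<and> card T = k}. f (card T))"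
  proof (rule sum.group[symmetric])
    show "finite (Pow A)" using A by simp
    show "finite {..card A}" by simp
    show "card ` Pow A \<subseteq> {..card A}" using A by (auto intro: card_mono)
  qed
  also have "\<dots> = (\<Sum>k\<le>card A. (card A choose k) * f k)"
  proof (rule sum.cong[OF refl])
    fix k
    have "(\<Sum>T\<in>{T. T \<in> Pow A \<and> card T = k}. f (card T)) = (\<Sum>T\<in>{T. T \<subseteq> A \<and> card T = k}. f k)"
      by (rule sum.cong) auto
    also have "\<dots> = card {T. T \<subseteq> A \<and> card T = k} * f k" by simp
    also have "\<dots> = (card A choose k) * f k" by (simp add: n_subsets[OF A])
    finally show "(\<Sum>T\<in>{T. T \<in> Pow A \<and> card T = k}. f (card T)) = (card A choose k) * f k" .
  qed
  finally show ?thesis .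
qed

lemma card_E: "card (E n) = (\<Sum>k\<le>n. (n choose k) * (k - 1))"
proof -
  define E' where "E' = Sigma (Pow {1..n}) (\<lambda>T. {j\<in>T. \<exists>s\<in>T. j < s})"
  have "bij_betw (\<lambda>(S,j). (insert j S, j)) (E n) E'"
  proof (rule bij_betw_byWitness[where f' = "\<lambda>(T,j). (T - {j}, j)"])
    show "\<forall>a\<in>E n. (\<lambda>(T,j). (T - {j}, j)) ((\<lambda>(S,j). (insert j S, j)) a) = a"
      by (auto simp: E_def)
    show "\<forall>a'\<in>E'. (\<lambda>(S,j). (insert j S, j)) ((\<lambda>(T,j). (T - {j}, j)) a') = a'"
      by (auto simp: E'_def)
    show "(\<lambda>(S,j). (insert j S, j)) ` E n \<subseteq> E'"
      by (auto simp: E_def E'_def)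
    show "(\<lambda>(T,j). (T - {j}, j)) ` E' \<subseteq> E n"
      by (auto simp: E_def E'_def)
  qed
  hence "card (E n) = card E'" by (rule bij_betw_same_card)
  also have "\<dots> = (\<Sum>T\<in>Pow {1..n}. card {j\<in>T. \<exists>s\<in>T. j < s})"
    unfolding E'_def by (rule card_SigmaI) (auto intro: finite_subset)
  also have "\<dots> = (\<Sum>T\<in>Pow {1..n}. card T - 1)"
  proof (rule sum.cong[OF refl])
    fix T assume "T \<in> Pow {1..n}"
    hence "finite T" by (auto intro: finite_subset)
    thus "card {j\<in>T. \<exists>s\<in>T. j < s} = card T - 1" by (rule card_notmax)
  qed
  also have "\<dots> = (\<Sum>k\<le>n. (n choose k) * (k - 1))"
    using sum_Pow_card[of "{1..n}" "\<lambda>k. k - 1"] by simp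
  finally show ?thesis .
qed

lemma count_int: "int (card (E n)) = (\<Sum>k=2..n. int (n choose k) * (int k - 1))"
proof -
  have "(\<Sum>k\<le>n. (n choose k) * (k - 1)) = (\<Sum>k=2..n. (n choose k) * (k - 1))"
  proof (rule sum.mono_neutral_right)
    show "\<forall>i\<in>{..n} - {2..n}. (n choose i) * (i - 1) = 0" by auto
  qed auto
  hence "int (card (E n)) = (\<Sum>k=2..n. int ((n choose k) * (k - 1)))"
    unfolding card_E by (simp only: of_nat_sum)
  also have "\<dots> = (\<Sum>k=2..n. int (n choose k) * (int k - 1))"
    by (rule sum.cong[OF refl]) (auto simp: of_nat_diff)
  finally show ?thesis .
qed

lemma closed_form: assumes n: "n \<ge> 1"
  shows "real_of_int (\<Sum>k=2..n. int (n choose k) * (int k - 1)) = 2 ^ n * (real n / 2 - 1) + 1"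
proof -
  define F where "F k = int (n choose k) * (int k - 1)" for k
  have at: "{..n} = insert 0 (insert 1 {2..n})" using n by auto
  have "(\<Sum>k\<le>n. F k) = F 0 + (F 1 + (\<Sum>k=2..n. F k))"
    unfolding at by (simp add: sum.insert)
  hence A: "(\<Sum>k=2..n. F k) = (\<Sum>k\<le>n. F k) + 1" by (simp add: F_def)
  have "(\<Sum>k\<le>n. F k) = (\<Sum>k\<le>n. int (k * (n choose k))) - (\<Sum>k\<le>n. int (n choose k))"
    by (simp add: F_def algebra_simps sum_subtractf)
  also have "\<dots> = int (n * 2 ^ (n - 1)) - int (2 ^ n)"
    by (simp only: of_nat_sum[symmetric] choose_linear_sum choose_row_sum)
  finally have B: "(\<Sum>k=2..n. F k) = int n * 2 ^ (n - 1) - 2 ^ n + 1" using A by simp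
  have p: "(2::real) ^ n = 2 * 2 ^ (n - 1)" using n by (metis power_Suc Suc_pred' less_eq_Suc_le Suc_le_eq One_nat_def)
  have "real_of_int (\<Sum>k=2..n. F k) = real n * 2 ^ (n - 1) - 2 ^ n + 1" unfolding B by simp
  also have "\<dots> = 2 ^ n * (real n / 2 - 1) + 1" unfolding p by (simp add: algebra_simps)
  finally show ?thesis by (simp add: F_def)
qed

lemma group_ratio:
  fixes p :: "'a \<Rightarrow> real"
  assumes A: "finite A"
    and H: "\<forall>\<sigma>\<in>A. (\<Sum>\<tau>\<in>{\<tau>\<in>A. key \<tau> = key \<sigma> \<and> Q \<tau>}. p \<tau>) = r * (\<Sum>\<tau>\<in>{\<tau>\<in>A. key \<tau> = key \<sigma>}. p \<tau>)"
  shows "(\<Sum>\<tau>\<in>{\<tau>\<in>A. Q \<tau>}. p \<tau>) = r * (\<Sum>\<tau>\<in>A. p \<tau>)"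
proof -
  have "(\<Sum>\<tau>\<in>{\<tau>\<in>A. Q \<tau>}. p \<tau>) = (\<Sum>y\<in>key ` A. \<Sum>\<tau>\<in>{x. x \<in> {\<tau>\<in>A. Q \<tau>} \<and> key x = y}. p \<tau>)"
    by (rule sum.group[symmetric]) (use A in auto)
  also have "\<dots> = (\<Sum>y\<in>key ` A. r * (\<Sum>\<tau>\<in>{x. x \<in> A \<and> key x = y}. p \<tau>))"
  proof (rule sum.cong[OF refl])
    fix y assume "y \<in> key ` A"
    then obtain \<sigma> where s: "\<sigma> \<in> A" "y = key \<sigma>" by blast
    have e1: "{x. x \<in> {\<tau>\<in>A. Q \<tau>} \<and> key x = y} = {\<tau>\<in>A. key \<tau> = key \<sigma> \<and> Q \<tau>}" using s by auto
    have e2: "{x. x \<in> A \<and> key x = y} = {\<tau>\<in>A. key \<tau> = key \<sigma>}" using s by auto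
    show "(\<Sum>\<tau>\<in>{x. x \<in> {\<tau>\<in>A. Q \<tau>} \<and> key x = y}. p \<tau>) = r * (\<Sum>\<tau>\<in>{x. x \<in> A \<and> key x = y}. p \<tau>)"
      unfolding e1 e2 using H s(1) by blast
  qed
  also have "\<dots> = r * (\<Sum>y\<in>key ` A. \<Sum>\<tau>\<in>{x. x \<in> A \<and> key x = y}. p \<tau>)"
    by (simp add: sum_distrib_left)
  also have "(\<Sum>y\<in>key ` A. \<Sum>\<tau>\<in>{x. x \<in> A \<and> key x = y}. p \<tau>) = (\<Sum>\<tau>\<in>A. p \<tau>)"
    by (rule sum.group) (use A in auto)
  finally show ?thesis .
qed

lemma sp_pos: "strictly_positive n p \<Longrightarrow> \<sigma> \<in> Sym n \<Longrightarrow> p \<sigma> > 0"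
  by (simp add: strictly_positive_def)

lemma Pr_pos:
  assumes sp: "strictly_positive n p" and s: "\<sigma> \<in> Sym n" and Ev: "Ev \<sigma>"
  shows "Pr n p Ev > 0"
proof -
  have fin: "finite {\<tau>\<in>Sym n. Ev \<tau>}" using finite_Sym by simp
  have "0 < p \<sigma>" using sp_pos[OF sp s] .
  also have "p \<sigma> \<le> (\<Sum>\<tau>\<in>{\<tau>\<in>Sym n. Ev \<tau>}. p \<tau>)"
    by (rule member_le_sum) (use s Ev sp_pos[OF sp] fin in \<open>auto intro: less_imp_le\<close>)
  finally show ?thesis by (simp add: Pr_def)
qed

locale ll_ctx =
  fixes n :: nat and p :: "perm \<Rightarrow> real" and w :: "nat \<Rightarrow> nat set \<Rightarrow> nat \<Rightarrow> real"
    and k :: nat and \<pi> :: perm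
  assumes sp: "strictly_positive n p"
    and lw: "\<forall>\<sigma>\<in>Sym n. ln (p \<sigma>) = (\<Sum>m\<in>{1..n}. w m (\<sigma> ` {1..<m}) (\<sigma> m))"
    and k: "k \<le> n" and pi: "\<pi> \<in> Sym n"
begin

definition A :: "perm \<Rightarrow> real" where "A \<sigma> = (\<Sum>m\<in>{1..k}. w m (\<sigma> ` {1..<m}) (\<sigma> m))"
definition B :: "perm \<Rightarrow> real" where "B \<sigma> = (\<Sum>m\<in>{k<..n}. w m (\<sigma> ` {1..<m}) (\<sigma> m))"
definition spl :: "perm \<Rightarrow> perm \<Rightarrow> perm" where "spl \<rho> \<sigma> = (\<lambda>x. if x \<in> {1..k} then \<rho> x else \<sigma> x)"

lemma p_split: assumes s: "\<sigma> \<in> Sym n" shows "p \<sigma> = exp (A \<sigma>) * exp (B \<sigma>)"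
proof -
  have U: "{1..n} = {1..k} \<union> {k<..n}" using k by auto
  have "(\<Sum>m\<in>{1..n}. w m (\<sigma> ` {1..<m}) (\<sigma> m)) = A \<sigma> + B \<sigma>"
    unfolding U A_def B_def by (rule sum.union_disjoint) auto
  hence "ln (p \<sigma>) = A \<sigma> + B \<sigma>" using lw s by simp
  hence "exp (ln (p \<sigma>)) = exp (A \<sigma> + B \<sigma>)" by simp
  thus ?thesis using sp_pos[OF sp s] by (simp add: exp_add)
qed

lemma A_eq: assumes "\<forall>i\<in>{1..k}. \<tau> i = \<rho> i" shows "A \<tau> = A \<rho>"
  unfolding A_def
proof (rule sum.cong[OF refl])
  fix m assume m: "m \<in> {1..k}"
  have "\<tau> ` {1..<m} = \<rho> ` {1..<m}" using m assms by (intro image_cong) auto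
  moreover have "\<tau> m = \<rho> m" using m assms by auto
  ultimately show "w m (\<tau> ` {1..<m}) (\<tau> m) = w m (\<rho> ` {1..<m}) (\<rho> m)" by simp
qed

lemma B_eq: assumes out: "\<forall>i. i \<notin> {1..k} \<longrightarrow> \<tau> i = \<sigma> i" and pre: "\<tau> ` {1..k} = \<sigma> ` {1..k}"
  shows "B \<tau> = B \<sigma>"
  unfolding B_def
proof (rule sum.cong[OF refl])
  fix m assume m: "m \<in> {k<..n}"
  have Um: "{1..<m} = {1..k} \<union> {k<..<m}" using m by auto
  have "\<tau> ` {k<..<m} = \<sigma> ` {k<..<m}" using out by (intro image_cong) auto
  hence "\<tau> ` {1..<m} = \<sigma> ` {1..<m}" unfolding Um image_Un using pre by simp
  moreover have "\<tau> m = \<sigma> m" using m out by auto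
  ultimately show "w m (\<tau> ` {1..<m}) (\<tau> m) = w m (\<sigma> ` {1..<m}) (\<sigma> m)" by simp
qed

lemma X:
  assumes r: "\<rho> \<in> Sym n" and rp: "\<rho> ` {1..k} = \<pi> ` {1..k}"
  shows "(\<Sum>\<tau>\<in>{\<tau>\<in>Sym n. Q (\<tau> (k+1)) \<and> (\<forall>i\<in>{1..k}. \<tau> i = \<rho> i)}. p \<tau>)
       = exp (A \<rho>) * (\<Sum>\<sigma>\<in>{\<sigma>\<in>Sym n. Q (\<sigma> (k+1)) \<and> (\<forall>i\<in>{1..k}. \<sigma> i = \<pi> i)}. exp (B \<sigma>))"
proof -
  let ?S = "{\<tau>\<in>Sym n. Q (\<tau> (k+1)) \<and> (\<forall>i\<in>{1..k}. \<tau> i = \<rho> i)}"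
  let ?T = "{\<sigma>\<in>Sym n. Q (\<sigma> (k+1)) \<and> (\<forall>i\<in>{1..k}. \<sigma> i = \<pi> i)}"
  have img: "\<tau> ` {1..k} = \<rho> ` {1..k}" if "\<forall>i\<in>{1..k}. \<tau> i = \<rho> i" for \<tau> \<rho> :: perm
    using that by (intro image_cong) auto
  have "(\<Sum>\<tau>\<in>?S. p \<tau>) = (\<Sum>\<sigma>\<in>?T. exp (A \<rho>) * exp (B \<sigma>))"
  proof (rule sum.reindex_bij_witness[where i = "spl \<rho>" and j = "spl \<pi>"])
    fix a assume a: "a \<in> ?S"
    show "spl \<rho> (spl \<pi> a) = a" using a by (auto simp: spl_def fun_eq_iff)
    have ea: "\<pi> ` {1..k} = a ` {1..k}" using img[of a \<rho>] a rp by auto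
    have "spl \<pi> a \<in> Sym n" unfolding spl_def by (rule splice_Sym[OF pi _ k ea]) (use a in simp)
    thus "spl \<pi> a \<in> ?T" using a by (auto simp: spl_def)
    have "A a = A \<rho>" using a by (intro A_eq) auto
    moreover have "B (spl \<pi> a) = B a"
    proof (rule B_eq)
      show "\<forall>i. i \<notin> {1..k} \<longrightarrow> spl \<pi> a i = a i" by (simp add: spl_def)
      have "spl \<pi> a ` {1..k} = \<pi> ` {1..k}" by (intro image_cong) (auto simp: spl_def)
      thus "spl \<pi> a ` {1..k} = a ` {1..k}" using ea by simp
    qed
    ultimately show "exp (A \<rho>) * exp (B (spl \<pi> a)) = p a" using p_split a by simp
  next
    fix b assume b: "b \<in> ?T"
    show "spl \<pi> (spl \<rho> b) = b" using b by (auto simp: spl_def fun_eq_iff)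
    have eb: "\<rho> ` {1..k} = b ` {1..k}" using img[of b \<pi>] b rp by auto
    have "spl \<rho> b \<in> Sym n" unfolding spl_def by (rule splice_Sym[OF r _ k eb]) (use b in simp)
    thus "spl \<rho> b \<in> ?S" using b by (auto simp: spl_def)
  qed
  thus ?thesis by (simp add: sum_distrib_left)
qed

end

lemma key_eq: "((\<lambda>i. if i \<in> {1..k} then \<tau> i else (0::nat)) = (\<lambda>i. if i \<in> {1..k} then \<sigma> i else 0))
   \<longleftrightarrow> (\<forall>i\<in>{1..k}. \<tau> i = \<sigma> i)"
proof
  assume "(\<lambda>i. if i \<in> {1..k} then \<tau> i else (0::nat)) = (\<lambda>i. if i \<in> {1..k} then \<sigma> i else 0)"
  thus "\<forall>i\<in>{1..k}. \<tau> i = \<sigma> i" by (metis (mono_tags, lifting))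
qed (auto simp: fun_eq_iff)

lemma LL_imp_Ldec:
  assumes sp: "strictly_positive n p"
    and lw: "\<forall>\<sigma>\<in>Sym n. ln (p \<sigma>) = (\<Sum>m\<in>{1..n}. w m (\<sigma> ` {1..<m}) (\<sigma> m))"
  shows "L_decomposable n p"
  unfolding L_decomposable_def
proof (intro allI impI, elim conjE)
  fix k \<pi> assume k2: "2 \<le> k" and kn: "k \<le> n - 2" and pi: "\<pi> \<in> Sym n"
  have k: "k \<le> n" using k2 kn by simp
  interpret ll_ctx n p w k \<pi> using sp lw k pi by unfold_locales
  define X where "X = (\<Sum>\<sigma>\<in>{\<sigma>\<in>Sym n. \<sigma> (k+1) = \<pi> (k+1) \<and> (\<forall>i\<in>{1..k}. \<sigma> i = \<pi> i)}. exp (B \<sigma>))"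
  define Y where "Y = (\<Sum>\<sigma>\<in>{\<sigma>\<in>Sym n. (\<forall>i\<in>{1..k}. \<sigma> i = \<pi> i)}. exp (B \<sigma>))"
  have Xl: "(\<Sum>\<tau>\<in>{\<tau>\<in>Sym n. \<tau> (k+1) = \<pi> (k+1) \<and> (\<forall>i\<in>{1..k}. \<tau> i = \<rho> i)}. p \<tau>) = exp (A \<rho>) * X"
    if "\<rho> \<in> Sym n" "\<rho> ` {1..k} = \<pi> ` {1..k}" for \<rho>
    using X[OF that, of "\<lambda>x. x = \<pi> (k+1)"] unfolding X_def by simp
  have Yl: "(\<Sum>\<tau>\<in>{\<tau>\<in>Sym n. (\<forall>i\<in>{1..k}. \<tau> i = \<rho> i)}. p \<tau>) = exp (A \<rho>) * Y"
    if "\<rho> \<in> Sym n" "\<rho> ` {1..k} = \<pi> ` {1..k}" for \<rho>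
    using X[OF that, of "\<lambda>x. True"] unfolding Y_def by simp
  have Ypos: "Y > 0"
  proof -
    have "0 < exp (B \<pi>)" by simp
    also have "exp (B \<pi>) \<le> Y" unfolding Y_def
      by (rule member_le_sum) (use pi finite_Sym in auto)
    finally show ?thesis .
  qed
  have LHS: "cond_Pr n p (\<lambda>\<sigma>. \<sigma> (k+1) = \<pi> (k+1)) (\<lambda>\<sigma>. \<forall>i\<in>{1..k}. \<sigma> i = \<pi> i) = X / Y"
    unfolding cond_Pr_def Pr_def using Xl[OF pi refl] Yl[OF pi refl] by simp
  define As where "As = {\<sigma>\<in>Sym n. \<sigma> ` {1..k} = \<pi> ` {1..k}}"
  have num: "(\<Sum>\<tau>\<in>{\<tau>\<in>As. \<tau> (k+1) = \<pi> (k+1)}. p \<tau>) = X / Y * (\<Sum>\<tau>\<in>As. p \<tau>)"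
  proof (rule group_ratio[where key = "\<lambda>\<tau> i. if i \<in> {1..k} then \<tau> i else 0"])
    show "finite As" using finite_Sym by (simp add: As_def)
    show "\<forall>\<sigma>\<in>As. (\<Sum>\<tau>\<in>{\<tau>\<in>As. (\<lambda>i. if i \<in> {1..k} then \<tau> i else 0) = (\<lambda>i. if i \<in> {1..k} then \<sigma> i else 0)
            \<and> \<tau> (k+1) = \<pi> (k+1)}. p \<tau>) =
          X / Y * (\<Sum>\<tau>\<in>{\<tau>\<in>As. (\<lambda>i. if i \<in> {1..k} then \<tau> i else 0) = (\<lambda>i. if i \<in> {1..k} then \<sigma> i else 0)}. p \<tau>)"
    proof
      fix \<sigma> assume s: "\<sigma> \<in> As"
      hence sS: "\<sigma> \<in> Sym n" and sp': "\<sigma> ` {1..k} = \<pi> ` {1..k}" by (auto simp: As_def)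
      have img: "\<tau> ` {1..k} = \<sigma> ` {1..k}" if "\<forall>i\<in>{1..k}. \<tau> i = \<sigma> i" for \<tau>
        using that by (intro image_cong) auto
      have e1: "{\<tau>\<in>As. (\<lambda>i. if i \<in> {1..k} then \<tau> i else 0) = (\<lambda>i. if i \<in> {1..k} then \<sigma> i else 0)
            \<and> \<tau> (k+1) = \<pi> (k+1)} = {\<tau>\<in>Sym n. \<tau> (k+1) = \<pi> (k+1) \<and> (\<forall>i\<in>{1..k}. \<tau> i = \<sigma> i)}"
        unfolding key_eq using img sp' by (auto simp: As_def)
      have e2: "{\<tau>\<in>As. (\<lambda>i. if i \<in> {1..k} then \<tau> i else 0) = (\<lambda>i. if i \<in> {1..k} then \<sigma> i else 0)}
            = {\<tau>\<in>Sym n. (\<forall>i\<in>{1..k}. \<tau> i = \<sigma> i)}"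
        unfolding key_eq using img sp' by (auto simp: As_def)
      show "(\<Sum>\<tau>\<in>{\<tau>\<in>As. (\<lambda>i. if i \<in> {1..k} then \<tau> i else 0) = (\<lambda>i. if i \<in> {1..k} then \<sigma> i else 0)
            \<and> \<tau> (k+1) = \<pi> (k+1)}. p \<tau>) =
          X / Y * (\<Sum>\<tau>\<in>{\<tau>\<in>As. (\<lambda>i. if i \<in> {1..k} then \<tau> i else 0) = (\<lambda>i. if i \<in> {1..k} then \<sigma> i else 0)}. p \<tau>)"
        unfolding e1 e2 Xl[OF sS sp'] Yl[OF sS sp'] using Ypos by simp
    qed
  qed
  have den: "(\<Sum>\<tau>\<in>As. p \<tau>) > 0"
    using Pr_pos[OF sp pi, of "\<lambda>\<sigma>. \<sigma> ` {1..k} = \<pi> ` {1..k}"] by (simp add: Pr_def As_def)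
  have RHS: "cond_Pr n p (\<lambda>\<sigma>. \<sigma> (k+1) = \<pi> (k+1)) (\<lambda>\<sigma>. \<sigma> ` {1..k} = \<pi> ` {1..k}) = X / Y"
  proof -
    have "{\<sigma>\<in>Sym n. \<sigma> (k+1) = \<pi> (k+1) \<and> \<sigma> ` {1..k} = \<pi> ` {1..k}} = {\<tau>\<in>As. \<tau> (k+1) = \<pi> (k+1)}"
      by (auto simp: As_def)
    hence "Pr n p (\<lambda>\<sigma>. \<sigma> (k+1) = \<pi> (k+1) \<and> \<sigma> ` {1..k} = \<pi> ` {1..k}) = X / Y * (\<Sum>\<tau>\<in>As. p \<tau>)"
      using num by (simp add: Pr_def)
    moreover have "Pr n p (\<lambda>\<sigma>. \<sigma> ` {1..k} = \<pi> ` {1..k}) = (\<Sum>\<tau>\<in>As. p \<tau>)"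
      by (simp add: Pr_def As_def)
    ultimately show ?thesis using den by (simp add: cond_Pr_def)
  qed
  show "cond_Pr n p (\<lambda>\<sigma>. \<sigma> (k+1) = \<pi> (k+1)) (\<lambda>\<sigma>. \<forall>i\<in>{1..k}. \<sigma> i = \<pi> i)
      = cond_Pr n p (\<lambda>\<sigma>. \<sigma> (k+1) = \<pi> (k+1)) (\<lambda>\<sigma>. \<sigma> ` {1..k} = \<pi> ` {1..k})"
    using LHS RHS by simp
qed

context
  fixes n :: nat and p :: "perm \<Rightarrow> real"
  assumes sp: "strictly_positive n p"
begin

definition Qk :: "nat \<Rightarrow> perm \<Rightarrow> real" where
  "Qk k \<pi> = Pr n p (\<lambda>\<sigma>. \<forall>i\<in>{1..k}. \<sigma> i = \<pi> i)"

definition tk :: "nat \<Rightarrow> perm \<Rightarrow> real" where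
  "tk k \<pi> = ln (Qk (Suc k) \<pi>) - ln (Qk k \<pi>)"

lemma Q0: "Qk 0 \<pi> = 1"
  using sp by (simp add: Qk_def Pr_def strictly_positive_def distribution_def)

lemma Qn: assumes pi: "\<pi> \<in> Sym n" shows "Qk n \<pi> = p \<pi>"
proof -
  have "{\<sigma>\<in>Sym n. \<forall>i\<in>{1..n}. \<sigma> i = \<pi> i} = {\<pi>}"
    using Sym_eq[OF pi] pi by auto
  thus ?thesis by (simp add: Qk_def Pr_def)
qed

lemma Qpos: "\<pi> \<in> Sym n \<Longrightarrow> Qk k \<pi> > 0"
  unfolding Qk_def by (rule Pr_pos[OF sp]) auto

lemma tele: assumes pi: "\<pi> \<in> Sym n" shows "(\<Sum>m\<in>{1..n}. tk (m - 1) \<pi>) = ln (p \<pi>)"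
proof -
  have "(\<Sum>m\<in>{1..n}. tk (m - 1) \<pi>) = (\<Sum>k<n. tk k \<pi>)"
  proof -
    have "(\<Sum>m\<in>{1..n}. tk (m - 1) \<pi>) = (\<Sum>m\<in>Suc ` {..<n}. tk (m - 1) \<pi>)"
      by (simp only: image_Suc_lessThan)
    also have "\<dots> = (\<Sum>k<n. tk k \<pi>)" by (simp add: sum.reindex)
    finally show ?thesis .
  qed
  also have "\<dots> = ln (Qk n \<pi>) - ln (Qk 0 \<pi>)"
    unfolding tk_def by (rule sum_lessThan_telescope)
  finally show ?thesis using Qn[OF pi] Q0 by simp
qed

lemma Q_agree: assumes "\<forall>i\<in>{1..j}. \<pi> i = \<sigma> i" shows "Qk j \<pi> = Qk j \<sigma>"
proof -
  have "(\<lambda>\<tau>. \<forall>i\<in>{1..j}. \<tau> i = \<pi> i) = (\<lambda>\<tau>. \<forall>i\<in>{1..j}. \<tau> i = \<sigma> i)"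
    using assms by auto
  thus ?thesis by (simp add: Qk_def)
qed

lemma last_zero: assumes n1: "n \<ge> 1" and pi: "\<pi> \<in> Sym n" shows "tk (n - 1) \<pi> = 0"
proof -
  have "{\<tau>\<in>Sym n. \<forall>i\<in>{1..n}. \<tau> i = \<pi> i} = {\<tau>\<in>Sym n. \<forall>i\<in>{1..n-1}. \<tau> i = \<pi> i}"
  proof (rule Collect_cong, rule iffI)
    fix \<tau>
    assume "\<tau> \<in> Sym n \<and> (\<forall>i\<in>{1..n}. \<tau> i = \<pi> i)"
    thus "\<tau> \<in> Sym n \<and> (\<forall>i\<in>{1..n-1}. \<tau> i = \<pi> i)" by auto
  next
    fix \<tau>
    assume a: "\<tau> \<in> Sym n \<and> (\<forall>i\<in>{1..n-1}. \<tau> i = \<pi> i)"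
    hence t: "\<tau> \<in> Sym n" by simp
    have pre: "\<tau> ` {1..<n} = \<pi> ` {1..<n}" using a by (intro image_cong) auto
    have ins: "{1..n} = insert n {1..<n}" using n1 by auto
    have tn: "\<tau> n \<in> {1..n}" using Sym_in[OF t] n1 by simp
    have "\<tau> n \<notin> \<pi> ` {1..<n}" using notin_pre[OF t, of n] pre by simp
    moreover have "\<tau> n \<in> insert (\<pi> n) (\<pi> ` {1..<n})"
    proof -
      have "\<tau> n \<in> \<pi> ` {1..n}" using tn by (simp only: Sym_image[OF pi])
      moreover have "\<pi> ` {1..n} = insert (\<pi> n) (\<pi> ` {1..<n})" unfolding ins by simp
      ultimately show ?thesis by simp
    qed
    ultimately have "\<tau> n = \<pi> n" by simp
    hence tn': "\<tau> n = \<pi> n" .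
    have "\<forall>i\<in>{1..n}. \<tau> i = \<pi> i"
    proof
      fix i assume i: "i \<in> {1..n}"
      show "\<tau> i = \<pi> i"
      proof (cases "i = n")
        case True thus ?thesis using tn' by simp
      next
        case False hence "i \<in> {1..n-1}" using i by auto
        thus ?thesis using a by blast
      qed
    qed
    thus "\<tau> \<in> Sym n \<and> (\<forall>i\<in>{1..n}. \<tau> i = \<pi> i)" using t by simp
  qed
  hence "Qk n \<pi> = Qk (n - 1) \<pi>" by (simp add: Qk_def Pr_def)
  thus ?thesis using n1 by (simp add: tk_def)
qed

lemma INV:
  assumes L: "L_decomposable n p" and kn: "k < n" and pi: "\<pi> \<in> Sym n" and si: "\<sigma> \<in> Sym n"
    and pre: "\<pi> ` {1..k} = \<sigma> ` {1..k}" and nx: "\<pi> (Suc k) = \<sigma> (Suc k)"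
  shows "tk k \<pi> = tk k \<sigma>"
proof -
  consider "k \<le> 1" | "k = n - 1" "k \<ge> 2" | "2 \<le> k" "k \<le> n - 2" using kn by linarith
  thus ?thesis
  proof cases
    case 1
    have ag: "\<forall>i\<in>{1..Suc k}. \<pi> i = \<sigma> i"
    proof (cases "k = 0")
      case True thus ?thesis using nx by auto
    next
      case False
      hence k1: "k = 1" using 1 by simp
      have "\<pi> 1 = \<sigma> 1" using pre k1 by simp
      thus ?thesis using nx k1 by (auto simp: le_Suc_eq)
    qed
    hence "Qk (Suc k) \<pi> = Qk (Suc k) \<sigma>" "Qk k \<pi> = Qk k \<sigma>" by (auto intro!: Q_agree)
    thus ?thesis by (simp add: tk_def)
  next
    case 2
    thus ?thesis using last_zero[OF _ pi] last_zero[OF _ si] kn by simp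
  next
    case 3
    have cv: "Qk (Suc k) \<rho> / Qk k \<rho> =
        cond_Pr n p (\<lambda>\<tau>. \<tau> (k+1) = \<rho> (k+1)) (\<lambda>\<tau>. \<forall>i\<in>{1..k}. \<tau> i = \<rho> i)" for \<rho>
    proof -
      have "(\<lambda>\<tau>. \<forall>i\<in>{1..Suc k}. \<tau> i = \<rho> i) = (\<lambda>\<tau>. \<tau> (k+1) = \<rho> (k+1) \<and> (\<forall>i\<in>{1..k}. \<tau> i = \<rho> i))"
        by (auto simp: le_Suc_eq fun_eq_iff)
      thus ?thesis by (simp add: Qk_def cond_Pr_def)
    qed
    have ld: "cond_Pr n p (\<lambda>\<tau>. \<tau> (k+1) = \<rho> (k+1)) (\<lambda>\<tau>. \<forall>i\<in>{1..k}. \<tau> i = \<rho> i)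
        = cond_Pr n p (\<lambda>\<tau>. \<tau> (k+1) = \<rho> (k+1)) (\<lambda>\<tau>. \<tau> ` {1..k} = \<rho> ` {1..k})" if r: "\<rho> \<in> Sym n" for \<rho>
    proof -
      have "Pr n p (\<lambda>\<tau>. \<forall>i\<in>{1..k}. \<tau> i = \<rho> i) > 0" by (rule Pr_pos[OF sp r]) simp
      thus ?thesis using L 3 r unfolding L_decomposable_def by blast
    qed
    have tq: "tk k \<rho> = ln (cond_Pr n p (\<lambda>\<tau>. \<tau> (k+1) = \<rho> (k+1)) (\<lambda>\<tau>. \<tau> ` {1..k} = \<rho> ` {1..k}))"
      if r: "\<rho> \<in> Sym n" for \<rho>
      unfolding tk_def ld[OF r, symmetric] cv[symmetric] using Qpos[OF r, of k] Qpos[OF r, of "Suc k"]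
      by (simp add: ln_div)
    show ?thesis unfolding tq[OF pi] tq[OF si] using pre nx by simp
  qed
qed

lemma Ldec_imp_LL:
  assumes L: "L_decomposable n p"
  shows "\<exists>w. \<forall>\<sigma>\<in>Sym n. ln (p \<sigma>) = (\<Sum>m\<in>{1..n}. w m (\<sigma> ` {1..<m}) (\<sigma> m))"
proof -
  define pick where "pick m S j = (SOME \<sigma>. \<sigma> \<in> Sym n \<and> \<sigma> ` {1..<m} = S \<and> \<sigma> m = j)" for m S j
  define w where "w m S j = tk (m - 1) (pick m S j)" for m S j
  have "ln (p \<sigma>) = (\<Sum>m\<in>{1..n}. w m (\<sigma> ` {1..<m}) (\<sigma> m))" if s: "\<sigma> \<in> Sym n" for \<sigma>
  proof -
    have "tk (m - 1) \<sigma> = w m (\<sigma> ` {1..<m}) (\<sigma> m)" if m: "m \<in> {1..n}" for m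
    proof -
      let ?r = "pick m (\<sigma> ` {1..<m}) (\<sigma> m)"
      have r: "?r \<in> Sym n \<and> ?r ` {1..<m} = \<sigma> ` {1..<m} \<and> ?r m = \<sigma> m"
        unfolding pick_def by (rule someI[of _ \<sigma>]) (simp add: s)
      have e1: "{1..<m} = {1..m - 1}" using m by auto
      have e2: "Suc (m - 1) = m" using m by simp
      have "tk (m - 1) \<sigma> = tk (m - 1) ?r"
        by (rule INV[OF L _ s]) (use r m e1 e2 in auto)
      thus ?thesis by (simp add: w_def)
    qed
    hence "(\<Sum>m\<in>{1..n}. w m (\<sigma> ` {1..<m}) (\<sigma> m)) = (\<Sum>m\<in>{1..n}. tk (m - 1) \<sigma>)" by simp
    thus ?thesis using tele[OF s] by simp
  qed
  thus ?thesis by blast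
qed

end

theorem mainTheorem4:
  fixes n :: nat
  assumes "n \<ge> 1"
  shows "{p. strictly_positive n p \<and> L_decomposable n p}
           = loglinear_model n ((\<lambda>k. (Phi n k, Psi n)) ` {1..n})
         \<and> int (fdim (U_model n ((\<lambda>k. (Phi n k, Psi n)) ` {1..n}))) - 1
           = (\<Sum>k=2..n. int (n choose k) * (int k - 1))
         \<and> real_of_int (\<Sum>k=2..n. int (n choose k) * (int k - 1)) = 2 ^ n * (real n / 2 - 1) + 1"
proof (intro conjI)
  note n = assms
  show "{p. strictly_positive n p \<and> L_decomposable n p} = loglinear_model n ((\<lambda>k. (Phi n k, Psi n)) ` {1..n})"
  proof (rule set_eqI, rule iffI)
    fix p assume "p \<in> {p. strictly_positive n p \<and> L_decomposable n p}"
    hence sp: "strictly_positive n p" and L: "L_decomposable n p" by auto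
    obtain w where w: "\<forall>\<sigma>\<in>Sym n. ln (p \<sigma>) = (\<Sum>m\<in>{1..n}. w m (\<sigma> ` {1..<m}) (\<sigma> m))"
      using Ldec_imp_LL[OF sp L] by blast
    have "logp n p \<in> Ws n" unfolding Ws_def
    proof (intro CollectI conjI)
      show "\<forall>\<pi>. \<pi> \<notin> Sym n \<longrightarrow> logp n p \<pi> = 0" by (simp add: logp_def)
      show "\<exists>w. \<forall>\<pi>\<in>Sym n. logp n p \<pi> = (\<Sum>m\<in>{1..n}. w m (\<pi> ` {1..<m}) (\<pi> m))"
        using w by (auto simp: logp_def)
    qed
    thus "p \<in> loglinear_model n ((\<lambda>k. (Phi n k, Psi n)) ` {1..n})"
      using sp unfolding loglinear_model_def U_model_Ws by simp
  next
    fix p assume "p \<in> loglinear_model n ((\<lambda>k. (Phi n k, Psi n)) ` {1..n})"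
    hence sp: "strictly_positive n p" and lw: "logp n p \<in> Ws n"
      unfolding loglinear_model_def U_model_Ws by auto
    from lw obtain w where w: "\<forall>\<pi>\<in>Sym n. logp n p \<pi> = (\<Sum>m\<in>{1..n}. w m (\<pi> ` {1..<m}) (\<pi> m))"
      unfolding Ws_def by blast
    hence "\<forall>\<sigma>\<in>Sym n. ln (p \<sigma>) = (\<Sum>m\<in>{1..n}. w m (\<sigma> ` {1..<m}) (\<sigma> m))"
      by (simp add: logp_def)
    hence "L_decomposable n p" by (rule LL_imp_Ldec[OF sp])
    thus "p \<in> {p. strictly_positive n p \<and> L_decomposable n p}" using sp by simp
  qed
  show "int (fdim (U_model n ((\<lambda>k. (Phi n k, Psi n)) ` {1..n}))) - 1
           = (\<Sum>k=2..n. int (n choose k) * (int k - 1))"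
    using dim_U[OF n] count_int[of n] by simp
  show "real_of_int (\<Sum>k=2..n. int (n choose k) * (int k - 1)) = 2 ^ n * (real n / 2 - 1) + 1"
    by (rule closed_form[OF n])
qed

end
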